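(* Let $K$ be a field of characteristic zero and let $A_1 = K\langle X, Y \mid YX - XY = 1\rangle$ be the first Weyl algebra over $K$. Let $P, Q \in A_1$ with $m(P) = 1$ or $m(Q) = 1$. If $PQ - QP = 1$, then there exists a $K$-algebra automorphism $\tau$ of $A_1$ such that $P = \tau(Y)$ and $Q = \tau(X)$.
   Context: The Weyl algebra $A_1$ is $\mathbb{Z}$-graded, $A_1 = \bigoplus_{i\in\mathbb{Z}} A_{1,i}$ with $A_{1,i}A_{1,j}\subseteq A_{1,i+j}$, where, writing $H = YX$, one has $A_{1,0} = K[H]$ and, for $i \geq 1$, $A_{1,i} = K[H]X^i$ and $A_{1,-i} = K[H]Y^i$. For a nonzero element $a \in A_1$, its mass $m(a)$ is the number of nonzero homogeneous components of $a$ with respect to this grading. *)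

theory Defs
  imports Main "HOL-Algebra.QuotRing"
begin

text \<open>The first Weyl algebra A_1 = K<X,Y | YX - XY = 1> over a field K, realised through
its standard K-basis of normally ordered monomials X^i Y^j (i, j in nat).
An element is a finitely supported coefficient function c, standing for
the sum over i, j of c i j X^i Y^j.  The product is determined by the relation YX = XY + 1,
which gives the normal ordering rule (Leibniz rule)
  (X^a Y^b)(X^c Y^d) = sum over l of (b choose l) (c choose l) l! X^(a+c-l) Y^(b+d-l).\<close>

type_synonym 'a weyl = "nat \<Rightarrow> nat \<Rightarrow> 'a"

definition weyl_supp :: "'a::zero weyl \<Rightarrow> (nat \<times> nat) set" where
  "weyl_supp f = {(i, j). f i j \<noteq> 0}"

definition weyl_carrier :: "'a::field weyl set" where
  "weyl_carrier = {f. finite (weyl_supp f)}"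

definition weyl_zero :: "'a::field weyl" where
  "weyl_zero = (\<lambda>i j. 0)"

definition weyl_one :: "'a::field weyl" where
  "weyl_one = (\<lambda>i j. if i = 0 \<and> j = 0 then 1 else 0)"

definition weyl_X :: "'a::field weyl" where
  "weyl_X = (\<lambda>i j. if i = 1 \<and> j = 0 then 1 else 0)"

definition weyl_Y :: "'a::field weyl" where
  "weyl_Y = (\<lambda>i j. if i = 0 \<and> j = 1 then 1 else 0)"

definition weyl_add :: "'a::field weyl \<Rightarrow> 'a weyl \<Rightarrow> 'a weyl" where
  "weyl_add f g = (\<lambda>i j. f i j + g i j)"

definition weyl_sub :: "'a::field weyl \<Rightarrow> 'a weyl \<Rightarrow> 'a weyl" where
  "weyl_sub f g = (\<lambda>i j. f i j - g i j)"

definition weyl_smult :: "'a::field \<Rightarrow> 'a weyl \<Rightarrow> 'a weyl" where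
  "weyl_smult c f = (\<lambda>i j. c * f i j)"

definition weyl_mult :: "'a::field weyl \<Rightarrow> 'a weyl \<Rightarrow> 'a weyl" where
  "weyl_mult f g = (\<lambda>i j.
     \<Sum>(a, b)\<in>weyl_supp f. \<Sum>(c, d)\<in>weyl_supp g. \<Sum>l\<in>{..b}.
       if l \<le> c \<and> a + c - l = i \<and> b + d - l = j
       then of_nat ((b choose l) * (c choose l) * fact l) * f a b * g c d
       else 0)"

definition weyl_ring :: "('a::field weyl) ring" where
  "weyl_ring = \<lparr>carrier = weyl_carrier, monoid.mult = weyl_mult, one = weyl_one,
                zero = weyl_zero, add = weyl_add\<rparr>"

definition weyl_K_automorphism :: "('a::field weyl \<Rightarrow> 'a weyl) \<Rightarrow> bool" where
  "weyl_K_automorphism \<tau> \<longleftrightarrow>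
     \<tau> \<in> ring_iso weyl_ring weyl_ring \<and>
     (\<forall>c. \<forall>f\<in>weyl_carrier. \<tau> (weyl_smult c f) = weyl_smult c (\<tau> f))"

definition weyl_component :: "int \<Rightarrow> 'a::field weyl \<Rightarrow> 'a weyl" where
  "weyl_component d f = (\<lambda>i j. if int i - int j = d then f i j else 0)"

definition weyl_mass :: "'a::field weyl \<Rightarrow> nat" where
  "weyl_mass f = card {d::int. weyl_component d f \<noteq> weyl_zero}"

end

theory Submission
  imports Defs "HOL-Computational_Algebra.Polynomial"
begin


lemma binom_shift_aux: "(b choose Suc l) * Suc l = (b choose l) * (b - l)"
  by (metis binomial_absorb_comp binomial_absorption mult.commute)

lemma nord1:
  fixes x y :: "'r::ring_1"
  assumes r: "y * x = x * y + 1"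
  shows "y ^ b * x = x * y ^ b + of_nat b * y ^ (b - 1)"
proof (induction b)
  case 0 then show ?case by simp
next
  case (Suc b)
  have "y ^ Suc b * x = y * (y ^ b * x)" by (simp add: mult.assoc)
  also have "\<dots> = (y * x) * y ^ b + of_nat b * (y * y ^ (b - 1))"
    using Suc by (simp add: algebra_simps mult_of_nat_commute)
  also have "\<dots> = x * y ^ Suc b + of_nat (Suc b) * y ^ b"
  proof (cases b)
    case 0 then show ?thesis using r by (simp add: algebra_simps)
  next
    case (Suc c) then show ?thesis using r by (simp add: algebra_simps)
  qed
  finally show ?case by simp
qed

lemma nord2:
  fixes x y :: "'r::ring_1"
  assumes r: "y * x = x * y + 1"
  shows "y ^ b * x ^ c = (\<Sum>l\<le>b. of_nat ((b choose l) * (c choose l) * fact l) * (x ^ (c - l) * y ^ (b - l)))"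
proof (induction c)
  case 0
  have "(\<Sum>l\<le>b. of_nat ((b choose l) * (0 choose l) * fact l) * (x ^ (0 - l) * y ^ (b - l)))
      = (\<Sum>l\<le>b. if l = 0 then y ^ b else (0::'r))"
    by (rule sum.cong) (auto simp: binomial_eq_0)
  then show ?case by simp
next
  case (Suc c)
  define k where "k l = (b choose l) * (c choose l) * fact l" for l
  have "y ^ b * x ^ Suc c = (y ^ b * x ^ c) * x" by (simp add: power_Suc2[symmetric] mult.assoc)
  also have "\<dots> = (\<Sum>l\<le>b. of_nat (k l) * (x ^ (c - l) * (y ^ (b - l) * x)))"
    unfolding Suc k_def by (simp add: sum_distrib_right mult.assoc)
  also have "\<dots> = (\<Sum>l\<le>b. of_nat (k l) * (x ^ (Suc c - l) * y ^ (b - l)))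
       + (\<Sum>l\<le>b. of_nat (k l * (b - l)) * (x ^ (c - l) * y ^ (b - l - 1)))"
  proof -
    have "of_nat (k l) * (x ^ (c - l) * (y ^ (b - l) * x)) =
       of_nat (k l) * (x ^ (Suc c - l) * y ^ (b - l)) + of_nat (k l * (b - l)) * (x ^ (c - l) * y ^ (b - l - 1))"
      if "l \<in> {..b}" for l
    proof (cases "l \<le> c")
      case True
      have "x ^ (c - l) * x = x ^ (Suc c - l)"
        using True by (simp add: Suc_diff_le power_commutes)
      have e1: "x ^ (c - l) * (of_nat (b - l) * y ^ (b - l - 1)) = of_nat (b - l) * (x ^ (c - l) * y ^ (b - l - 1))"
        by (metis mult.assoc mult_of_nat_commute)
      have "of_nat (k l) * (x ^ (c - l) * (y ^ (b - l) * x)) =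
         of_nat (k l) * ((x ^ (c - l) * x) * y ^ (b - l)) + of_nat (k l) * (x ^ (c - l) * (of_nat (b - l) * y ^ (b - l - 1)))"
        unfolding nord1[OF r] by (simp only: distrib_left mult.assoc)
      also have "\<dots> = of_nat (k l) * (x ^ (Suc c - l) * y ^ (b - l)) + of_nat (k l * (b - l)) * (x ^ (c - l) * y ^ (b - l - 1))"
        unfolding e1 \<open>x ^ (c - l) * x = x ^ (Suc c - l)\<close> by (simp only: of_nat_mult mult.assoc)
      finally show ?thesis .
    next
      case False
      then have "k l = 0" by (simp add: k_def)
      then show ?thesis by simp
    qed
    then show ?thesis by (simp add: sum.distrib)
  qed
  also have "(\<Sum>l\<le>b. of_nat (k l * (b - l)) * (x ^ (c - l) * y ^ (b - l - 1)))
     = (\<Sum>l\<le>b. of_nat (if l = 0 then 0 else (b choose l) * (c choose (l - 1)) * fact l) * (x ^ (Suc c - l) * y ^ (b - l)))"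
  proof (cases b)
    case 0 then show ?thesis by simp
  next
    case (Suc b')
    have "(\<Sum>l\<le>b. of_nat (k l * (b - l)) * (x ^ (c - l) * y ^ (b - l - 1)))
        = (\<Sum>l\<le>b'. of_nat (k l * (b - l)) * (x ^ (c - l) * y ^ (b - l - 1)))"
      using Suc by (simp add: k_def)
    also have "\<dots> = (\<Sum>l\<le>b'. of_nat ((b choose Suc l) * (c choose l) * fact (Suc l)) * (x ^ (Suc c - Suc l) * y ^ (b - Suc l)))"
    proof (rule sum.cong[OF refl])
      fix l
      have "k l * (b - l) = (b choose Suc l) * (c choose l) * fact (Suc l)"
      proof -
        have "(b choose Suc l) * (c choose l) * fact (Suc l) = ((b choose Suc l) * Suc l) * (c choose l) * fact l"
          by (simp only: fact_Suc mult_ac of_nat_id)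
        also have "\<dots> = k l * (b - l)" unfolding binom_shift_aux k_def by (simp only: mult_ac)
        finally show ?thesis by simp
      qed
      then show "of_nat (k l * (b - l)) * (x ^ (c - l) * y ^ (b - l - 1)) =
          of_nat ((b choose Suc l) * (c choose l) * fact (Suc l)) * (x ^ (Suc c - Suc l) * y ^ (b - Suc l))"
        by simp
    qed
    also have "\<dots> = (\<Sum>l\<le>b. of_nat (if l = 0 then 0 else (b choose l) * (c choose (l - 1)) * fact l) * (x ^ (Suc c - l) * y ^ (b - l)))"
      unfolding Suc by (subst sum.atMost_Suc_shift) simp
    finally show ?thesis .
  qed
  also have "(\<Sum>l\<le>b. of_nat (k l) * (x ^ (Suc c - l) * y ^ (b - l))) + \<dots>
     = (\<Sum>l\<le>b. of_nat ((b choose l) * (Suc c choose l) * fact l) * (x ^ (Suc c - l) * y ^ (b - l)))"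
  proof -
    have "of_nat (k l) * (x ^ (Suc c - l) * y ^ (b - l)) + of_nat (if l = 0 then 0 else (b choose l) * (c choose (l - 1)) * fact l) * (x ^ (Suc c - l) * y ^ (b - l))
       = of_nat ((b choose l) * (Suc c choose l) * fact l) * (x ^ (Suc c - l) * y ^ (b - l))" for l
    proof (cases l)
      case 0 then show ?thesis by (simp add: k_def)
    next
      case (Suc l')
      have "k l + (b choose l) * (c choose (l - 1)) * fact l = (b choose l) * (Suc c choose l) * fact l"
        unfolding k_def Suc by (simp add: algebra_simps)
      then have "of_nat (k l) + of_nat ((b choose l) * (c choose (l - 1)) * fact l) = (of_nat ((b choose l) * (Suc c choose l) * fact l) :: 'r)"
        by (metis of_nat_add)
      then show ?thesis using Suc by (simp only: distrib_right[symmetric]) simp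
    qed
    then show ?thesis by (simp add: sum.distrib[symmetric])
  qed
  finally show ?case .
qed



typedef (overloaded) 'a lop = "{F :: 'a::field poly \<Rightarrow> 'a poly. (\<forall>p q. F (p + q) = F p + F q) \<and> (\<forall>c p. F (smult c p) = smult c (F p))}"
  morphisms app Lop
  by (rule exI[of _ "\<lambda>p. p"]) auto

setup_lifting type_definition_lop

instantiation lop :: (field) ring_1
begin
lift_definition zero_lop :: "'a lop" is "\<lambda>p. 0" by simp
lift_definition one_lop :: "'a lop" is "\<lambda>p. p" by simp
lift_definition plus_lop :: "'a lop \<Rightarrow> 'a lop \<Rightarrow> 'a lop" is "\<lambda>F G p. F p + G p"
  by (simp add: algebra_simps smult_add_right)
lift_definition minus_lop :: "'a lop \<Rightarrow> 'a lop \<Rightarrow> 'a lop" is "\<lambda>F G p. F p - G p"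
  by (simp add: algebra_simps smult_diff_right)
lift_definition uminus_lop :: "'a lop \<Rightarrow> 'a lop" is "\<lambda>F p. - F p"
  by (simp add: algebra_simps)
lift_definition times_lop :: "'a lop \<Rightarrow> 'a lop \<Rightarrow> 'a lop" is "\<lambda>F G p. F (G p)"
  by simp
instance
proof
  fix a b c :: "'a lop"
  show "a + b + c = a + (b + c)" by transfer (simp add: add.assoc)
  show "a + b = b + a" by transfer (simp add: add.commute)
  show "0 + a = a" by transfer simp
  show "- a + a = 0" by transfer simp
  show "a - b = a + - b" by transfer simp
  show "a * b * c = a * (b * c)" by transfer simp
  show "1 * a = a" by transfer simp
  show "a * 1 = a" by transfer simp
  show "(a + b) * c = a * c + b * c" by transfer simp
  show "a * (b + c) = a * b + a * c" by transfer simp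
  show "(0::'a lop) \<noteq> 1"
  proof
    assume "(0::'a lop) = 1"
    then have "app (0::'a lop) 1 = app 1 1" by simp
    then show False by transfer simp
  qed
qed
end

lemma app_add[simp]: "app (F + G) p = app F p + app G p" by transfer simp
lemma app_diff[simp]: "app (F - G) p = app F p - app G p" by transfer simp
lemma app_mult[simp]: "app (F * G) p = app F (app G p)" by transfer simp
lemma app_one[simp]: "app 1 p = p" by transfer simp
lemma app_zero[simp]: "app 0 p = 0" by transfer simp
lemma app_padd: "app F (p + q) = app F p + app F q" by transfer simp
lemma app_smult: "app F (smult c p) = smult c (app F p)" by transfer simp
lemma app_sum[simp]: "app (sum f S) p = (\<Sum>s\<in>S. app (f s) p)"
  by (induction S rule: infinite_finite_induct) auto
lemma app_pzero[simp]: "app F 0 = 0"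
  using app_smult[of F 0 0] by simp
lemma app_psum: "app F (sum f S) = (\<Sum>s\<in>S. app F (f s))"
  by (induction S rule: infinite_finite_induct) (auto simp: app_padd)
lemma app_pow[simp]: "app (F ^ n) p = ((app F) ^^ n) p"
  by (induction n arbitrary: p) (auto simp: funpow_Suc_right)
lemma app_eqI: "(\<And>p. app F p = app G p) \<Longrightarrow> F = G"
  by transfer auto

lift_definition cl :: "'a::field \<Rightarrow> 'a lop" is "\<lambda>c p. smult c p"
  by (simp add: smult_add_right mult.commute)
lift_definition Tl :: "'a::field lop" is "\<lambda>p. [:0,1:] * p"
  by (simp add: algebra_simps)
lift_definition Dl :: "'a::field lop" is "pderiv"
  by (simp add: pderiv_add pderiv_smult)

lemma app_cl[simp]: "app (cl c) p = smult c p" by transfer simp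
lemma app_Tl[simp]: "app Tl p = [:0,1:] * p" by transfer simp
lemma app_Dl[simp]: "app Dl p = pderiv p" by transfer simp

lemma cl_comm: "cl c * F = F * cl c"
  by (rule app_eqI) (simp add: app_smult)
lemma cl_mult: "cl (a * b) = cl a * cl b"
  by (rule app_eqI) simp
lemma cl_add: "cl (a + b) = cl a + cl b"
  by (rule app_eqI) (simp add: smult_add_left)
lemma cl_one: "cl 1 = 1" by (rule app_eqI) simp
lemma cl_zero: "cl 0 = 0" by (rule app_eqI) simp
lemma cl_of_nat: "cl (of_nat n) = of_nat n"
  by (induction n) (simp_all add: cl_add cl_one cl_zero)

lemma DT_rel: "Dl * Tl = Tl * Dl + (1 :: 'a::field lop)"
  by (rule app_eqI) (simp add: pderiv_mult pderiv_pCons)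

lemma Tl_pow: "app (Tl ^ n) p = monom 1 n * p"
proof (induction n arbitrary: p)
  case 0 then show ?case by (simp add: monom_0 one_pCons)
next
  case (Suc n)
  have "monom 1 (Suc n) = [:0,1:] * monom (1::'a) n"
    by (simp add: monom_Suc)
  then show ?case using Suc by (simp add: funpow_Suc_right mult.assoc)
qed



definition mon :: "nat \<Rightarrow> nat \<Rightarrow> 'a::field lop" where
  "mon i j = Tl ^ i * Dl ^ j"

definition phi :: "'a::field weyl \<Rightarrow> 'a lop" where
  "phi f = (\<Sum>p\<in>weyl_supp f. cl (f (fst p) (snd p)) * mon (fst p) (snd p))"

lemma cl_sum: "cl (sum f S) = (\<Sum>s\<in>S. cl (f s))"
  by (induction S rule: infinite_finite_induct) (auto simp: cl_add cl_zero)

lemma carrier_finite: "f \<in> weyl_carrier \<Longrightarrow> finite (weyl_supp f)"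
  by (simp add: weyl_carrier_def)

lemma supp_iff: "p \<in> weyl_supp f \<longleftrightarrow> f (fst p) (snd p) \<noteq> 0"
  by (cases p) (simp add: weyl_supp_def)

lemma phi_superset:
  assumes "finite S" "weyl_supp f \<subseteq> S"
  shows "phi f = (\<Sum>p\<in>S. cl (f (fst p) (snd p)) * mon (fst p) (snd p))"
  unfolding phi_def
  by (rule sum.mono_neutral_left[OF assms]) (auto simp: supp_iff cl_zero)

lemma weyl_mult_alt: "weyl_mult f g i j =
  (\<Sum>p\<in>weyl_supp f. \<Sum>q\<in>weyl_supp g. \<Sum>l\<in>{..snd p}.
      if l \<le> fst q \<and> fst p + fst q - l = i \<and> snd p + snd q - l = j
      then of_nat ((snd p choose l) * (fst q choose l) * fact l) * f (fst p) (snd p) * g (fst q) (snd q)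
      else 0)"
  unfolding weyl_mult_def by (simp add: split_def)

lemma finite_box: "finite (S::(nat\<times>nat) set) \<Longrightarrow> \<exists>N. \<forall>p\<in>S. fst p \<le> N \<and> snd p \<le> N"
proof (induction S rule: finite_induct)
  case empty then show ?case by simp
next
  case (insert x F)
  then obtain N where N: "\<forall>p\<in>F. fst p \<le> N \<and> snd p \<le> N" by blast
  then show ?case
  proof (intro exI ballI)
    fix p assume "p \<in> insert x F"
    then show "fst p \<le> N + fst x + snd x \<and> snd p \<le> N + fst x + snd x" using N by auto
  qed
qed

lemma mult_supp_box:
  assumes "\<forall>p\<in>weyl_supp f. fst p \<le> N \<and> snd p \<le> N" "\<forall>p\<in>weyl_supp g. fst p \<le> N \<and> snd p \<le> N"
  shows "weyl_supp (weyl_mult f g) \<subseteq> {..2*N} \<times> {..2*N}"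
proof
  fix x assume "x \<in> weyl_supp (weyl_mult f g)"
  then have "weyl_mult f g (fst x) (snd x) \<noteq> 0" by (simp add: supp_iff)
  then obtain p where p: "p \<in> weyl_supp f" and "(\<Sum>q\<in>weyl_supp g. \<Sum>l\<in>{..snd p}.
      if l \<le> fst q \<and> fst p + fst q - l = fst x \<and> snd p + snd q - l = snd x
      then of_nat ((snd p choose l) * (fst q choose l) * fact l) * f (fst p) (snd p) * g (fst q) (snd q)
      else 0) \<noteq> 0"
    unfolding weyl_mult_alt by (meson sum.not_neutral_contains_not_neutral)
  then obtain q where q: "q \<in> weyl_supp g" and s2: "(\<Sum>l\<in>{..snd p}.
      if l \<le> fst q \<and> fst p + fst q - l = fst x \<and> snd p + snd q - l = snd x
      then of_nat ((snd p choose l) * (fst q choose l) * fact l) * f (fst p) (snd p) * g (fst q) (snd q)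
      else 0) \<noteq> 0"
    by (meson sum.not_neutral_contains_not_neutral)
  then obtain l where "l \<in> {..snd p}" "(if l \<le> fst q \<and> fst p + fst q - l = fst x \<and> snd p + snd q - l = snd x
      then of_nat ((snd p choose l) * (fst q choose l) * fact l) * f (fst p) (snd p) * g (fst q) (snd q)
      else 0) \<noteq> 0"
    by (elim conjE sum.not_neutral_contains_not_neutral)
  then have pq: "p \<in> weyl_supp f" "q \<in> weyl_supp g"
     "l \<le> fst q \<and> fst p + fst q - l = fst x \<and> snd p + snd q - l = snd x"
    using p q by (auto split: if_splits)
  have "fst p \<le> N" "snd p \<le> N" "fst q \<le> N" "snd q \<le> N" using pq(1,2) assms by auto
  then have "fst x \<le> 2*N" "snd x \<le> 2*N" using pq(3) by linarith+
  then show "x \<in> {..2*N} \<times> {..2*N}" by (cases x) auto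
qed

lemma mult_carrier:
  assumes "f \<in> weyl_carrier" "g \<in> weyl_carrier"
  shows "weyl_mult f g \<in> weyl_carrier"
proof -
  obtain N where "\<forall>p\<in>weyl_supp f \<union> weyl_supp g. fst p \<le> N \<and> snd p \<le> N"
    using finite_box[of "weyl_supp f \<union> weyl_supp g"] assms carrier_finite by blast
  then have "weyl_supp (weyl_mult f g) \<subseteq> {..2*N} \<times> {..2*N}"
    by (intro mult_supp_box) auto
  then show ?thesis unfolding weyl_carrier_def by (auto intro: finite_subset)
qed

lemma of_nat_mid: "(A::'r::ring_1) * (of_nat k * B) = of_nat k * (A * B)"
  by (metis mult.assoc mult_of_nat_commute)

lemma mon_mult:
  "mon a b * mon c d = (\<Sum>l\<le>b. if l \<le> c then of_nat ((b choose l) * (c choose l) * fact l) * mon (a + c - l) (b + d - l) else 0)"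
proof -
  have "mon a b * mon c d = Tl ^ a * (Dl ^ b * Tl ^ c) * Dl ^ d"
    by (simp add: mon_def mult.assoc)
  also have "\<dots> = Tl ^ a * (\<Sum>l\<le>b. of_nat ((b choose l) * (c choose l) * fact l) * (Tl ^ (c - l) * Dl ^ (b - l))) * Dl ^ d"
    by (simp add: nord2[OF DT_rel])
  also have "\<dots> = (\<Sum>l\<le>b. Tl ^ a * (of_nat ((b choose l) * (c choose l) * fact l) * (Tl ^ (c - l) * Dl ^ (b - l))) * Dl ^ d)"
    by (simp add: sum_distrib_left sum_distrib_right)
  also have "\<dots> = (\<Sum>l\<le>b. if l \<le> c then of_nat ((b choose l) * (c choose l) * fact l) * mon (a + c - l) (b + d - l) else 0)"
  proof (rule sum.cong[OF refl])
    fix l assume "l \<in> {..b}"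
    then have lb: "l \<le> b" by simp
    show "Tl ^ a * (of_nat ((b choose l) * (c choose l) * fact l) * (Tl ^ (c - l) * Dl ^ (b - l))) * Dl ^ d =
      (if l \<le> c then of_nat ((b choose l) * (c choose l) * fact l) * mon (a + c - l) (b + d - l) else 0)"
    proof (cases "l \<le> c")
      case True
      have "Tl ^ a * (of_nat ((b choose l) * (c choose l) * fact l) * (Tl ^ (c - l) * Dl ^ (b - l))) * Dl ^ d
         = of_nat ((b choose l) * (c choose l) * fact l) * ((Tl ^ a * Tl ^ (c - l)) * (Dl ^ (b - l) * Dl ^ d))"
        by (simp only: of_nat_mid mult.assoc)
      also have "\<dots> = of_nat ((b choose l) * (c choose l) * fact l) * mon (a + c - l) (b + d - l)"
        using True lb by (simp add: mon_def power_add[symmetric])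
      finally show ?thesis using True by simp
    next
      case False then show ?thesis by (simp add: binomial_eq_0)
    qed
  qed
  finally show ?thesis .
qed



lemma cl_mid: "A * (cl c * B) = cl c * (A * B)"
  by (rule app_eqI) (simp add: app_smult)

lemma phi_mult:
  assumes f: "f \<in> weyl_carrier" and g: "g \<in> weyl_carrier"
  shows "phi (weyl_mult f g) = phi f * phi g"
proof -
  let ?Sf = "weyl_supp f" and ?Sg = "weyl_supp g"
  obtain N where N: "\<forall>p\<in>?Sf \<union> ?Sg. fst p \<le> N \<and> snd p \<le> N"
    using finite_box[of "?Sf \<union> ?Sg"] f g carrier_finite by blast
  define S where "S = {..2*N} \<times> {..2*N}"
  have finS: "finite S" unfolding S_def by simp
  have suppS: "weyl_supp (weyl_mult f g) \<subseteq> S"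
    unfolding S_def by (rule mult_supp_box) (use N in auto)
  define K where "K p q l = of_nat ((snd p choose l) * (fst q choose l) * fact l) * f (fst p) (snd p) * g (fst q) (snd q)" for p q l
  define CC where "CC p q l x = (l \<le> fst q \<and> fst p + fst q - l = fst x \<and> snd p + snd q - l = snd x)" for p q l and x :: "nat \<times> nat"
  define R where "R p q l = (if l \<le> fst q then cl (K p q l) * mon (fst p + fst q - l) (snd p + snd q - l) else 0)" for p q l
  have "phi (weyl_mult f g) = (\<Sum>x\<in>S. cl (weyl_mult f g (fst x) (snd x)) * mon (fst x) (snd x))"
    by (rule phi_superset[OF finS suppS])
  also have "\<dots> = (\<Sum>x\<in>S. \<Sum>p\<in>?Sf. \<Sum>q\<in>?Sg. \<Sum>l\<in>{..snd p}. if CC p q l x then cl (K p q l) * mon (fst x) (snd x) else 0)"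
    unfolding weyl_mult_alt cl_sum sum_distrib_right K_def CC_def
    by (intro sum.cong refl) (simp add: cl_zero)
  also have "\<dots> = (\<Sum>p\<in>?Sf. \<Sum>q\<in>?Sg. \<Sum>l\<in>{..snd p}. \<Sum>x\<in>S. if CC p q l x then cl (K p q l) * mon (fst x) (snd x) else 0)"
    by (simp only: sum.swap[where A=S])
  also have "\<dots> = (\<Sum>p\<in>?Sf. \<Sum>q\<in>?Sg. \<Sum>l\<in>{..snd p}. R p q l)"
  proof (intro sum.cong refl)
    fix p q l assume p: "p \<in> ?Sf" and q: "q \<in> ?Sg" and l: "l \<in> {..snd p}"
    show "(\<Sum>x\<in>S. if CC p q l x then cl (K p q l) * mon (fst x) (snd x) else 0) = R p q l"
    proof (cases "l \<le> fst q")
      case True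
      let ?x0 = "(fst p + fst q - l, snd p + snd q - l)"
      have "fst p \<le> N" "snd p \<le> N" "fst q \<le> N" "snd q \<le> N" using N p q by auto
      then have "?x0 \<in> S" unfolding S_def by auto
      have "CC p q l x \<longleftrightarrow> x = ?x0" for x using True unfolding CC_def by (cases x) auto
      then have "(\<Sum>x\<in>S. if CC p q l x then cl (K p q l) * mon (fst x) (snd x) else 0)
          = (\<Sum>x\<in>S. if x = ?x0 then cl (K p q l) * mon (fst ?x0) (snd ?x0) else 0)"
        by (intro sum.cong refl) auto
      also have "\<dots> = cl (K p q l) * mon (fst ?x0) (snd ?x0)"
        using \<open>?x0 \<in> S\<close> finS by (simp add: sum.delta')
      finally show ?thesis unfolding R_def using True by simp
    next
      case False
      then show ?thesis unfolding R_def CC_def by simp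
    qed
  qed
  also have "\<dots> = phi f * phi g"
  proof -
    have "phi f * phi g = (\<Sum>p\<in>?Sf. \<Sum>q\<in>?Sg. (cl (f (fst p) (snd p)) * mon (fst p) (snd p)) * (cl (g (fst q) (snd q)) * mon (fst q) (snd q)))"
      unfolding phi_def by (simp add: sum_product)
    also have "\<dots> = (\<Sum>p\<in>?Sf. \<Sum>q\<in>?Sg. \<Sum>l\<in>{..snd p}. R p q l)"
    proof (intro sum.cong refl)
      fix p q
      have "(cl (f (fst p) (snd p)) * mon (fst p) (snd p)) * (cl (g (fst q) (snd q)) * mon (fst q) (snd q))
          = cl (f (fst p) (snd p) * g (fst q) (snd q)) * (mon (fst p) (snd p) * mon (fst q) (snd q))"
        by (rule app_eqI) (simp add: app_smult mult.commute)
      also have "\<dots> = (\<Sum>l\<in>{..snd p}. R p q l)"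
        unfolding mon_mult sum_distrib_left R_def
      proof (intro sum.cong refl)
        fix l
        show "cl (f (fst p) (snd p) * g (fst q) (snd q)) *
         (if l \<le> fst q then of_nat ((snd p choose l) * (fst q choose l) * fact l) * mon (fst p + fst q - l) (snd p + snd q - l) else 0) =
         (if l \<le> fst q then cl (K p q l) * mon (fst p + fst q - l) (snd p + snd q - l) else 0)"
        proof (cases "l \<le> fst q")
          case True
          have "cl (K p q l) = of_nat ((snd p choose l) * (fst q choose l) * fact l) * cl (f (fst p) (snd p) * g (fst q) (snd q))"
            unfolding K_def by (simp add: cl_mult cl_of_nat mult.assoc)
          then show ?thesis using True
            by (simp only: if_True of_nat_mid mult.assoc)
        qed simp
      qed
      finally show "(cl (f (fst p) (snd p)) * mon (fst p) (snd p)) * (cl (g (fst q) (snd q)) * mon (fst q) (snd q)) = (\<Sum>l\<in>{..snd p}. R p q l)" .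
    qed
    finally show ?thesis by (rule sym)
  qed
  finally show ?thesis .
qed



lemma supp_add: "weyl_supp (weyl_add f g) \<subseteq> weyl_supp f \<union> weyl_supp g"
  by (auto simp: weyl_supp_def weyl_add_def)
lemma supp_sub: "weyl_supp (weyl_sub f g) \<subseteq> weyl_supp f \<union> weyl_supp g"
  by (auto simp: weyl_supp_def weyl_sub_def)
lemma supp_smult: "weyl_supp (weyl_smult c f) \<subseteq> weyl_supp f"
  by (auto simp: weyl_supp_def weyl_smult_def)

lemma add_carrier: "f \<in> weyl_carrier \<Longrightarrow> g \<in> weyl_carrier \<Longrightarrow> weyl_add f g \<in> weyl_carrier"
  unfolding weyl_carrier_def using supp_add by (auto intro: finite_subset)
lemma sub_carrier: "f \<in> weyl_carrier \<Longrightarrow> g \<in> weyl_carrier \<Longrightarrow> weyl_sub f g \<in> weyl_carrier"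
  unfolding weyl_carrier_def using supp_sub by (auto intro: finite_subset)
lemma smult_carrier: "f \<in> weyl_carrier \<Longrightarrow> weyl_smult c f \<in> weyl_carrier"
  unfolding weyl_carrier_def using supp_smult by (auto intro: finite_subset)

lemma supp_one: "weyl_supp (weyl_one :: 'a::field weyl) = {(0,0)}"
  by (auto simp: weyl_supp_def weyl_one_def split: if_splits)
lemma supp_X: "weyl_supp (weyl_X :: 'a::field weyl) = {(1,0)}"
  by (auto simp: weyl_supp_def weyl_X_def split: if_splits)
lemma supp_Y: "weyl_supp (weyl_Y :: 'a::field weyl) = {(0,1)}"
  by (auto simp: weyl_supp_def weyl_Y_def split: if_splits)
lemma supp_zero: "weyl_supp (weyl_zero :: 'a::field weyl) = {}"
  by (auto simp: weyl_supp_def weyl_zero_def)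

lemma one_carrier: "weyl_one \<in> weyl_carrier" by (simp add: weyl_carrier_def supp_one)
lemma X_carrier: "weyl_X \<in> weyl_carrier" by (simp add: weyl_carrier_def supp_X)
lemma Y_carrier: "weyl_Y \<in> weyl_carrier" by (simp add: weyl_carrier_def supp_Y)
lemma zero_carrier: "weyl_zero \<in> weyl_carrier" by (simp add: weyl_carrier_def supp_zero)

lemma phi_add:
  assumes "f \<in> weyl_carrier" "g \<in> weyl_carrier"
  shows "phi (weyl_add f g) = phi f + phi g"
proof -
  let ?S = "weyl_supp f \<union> weyl_supp g"
  have fin: "finite ?S" using assms carrier_finite by auto
  show ?thesis
    unfolding phi_superset[OF fin supp_add] phi_superset[OF fin Un_upper1] phi_superset[OF fin Un_upper2]
    by (simp add: weyl_add_def cl_add distrib_right sum.distrib)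
qed

lemma phi_sub:
  assumes "f \<in> weyl_carrier" "g \<in> weyl_carrier"
  shows "phi (weyl_sub f g) = phi f - phi g"
proof -
  let ?S = "weyl_supp f \<union> weyl_supp g"
  have fin: "finite ?S" using assms carrier_finite by auto
  have cl_diff: "cl (a - b) = cl a - cl b" for a b :: 'a
    by (rule app_eqI) (simp add: smult_diff_left)
  show ?thesis
    unfolding phi_superset[OF fin supp_sub] phi_superset[OF fin Un_upper1] phi_superset[OF fin Un_upper2]
    by (simp add: weyl_sub_def cl_diff left_diff_distrib sum_subtractf)
qed

lemma phi_smult:
  assumes "f \<in> weyl_carrier"
  shows "phi (weyl_smult c f) = cl c * phi f"
proof -
  have fin: "finite (weyl_supp f)" using assms carrier_finite by auto
  show ?thesis
    unfolding phi_superset[OF fin supp_smult] phi_superset[OF fin order_refl]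
    by (simp add: weyl_smult_def cl_mult sum_distrib_left mult.assoc)
qed

lemma phi_one: "phi weyl_one = 1"
  unfolding phi_def supp_one by (simp add: weyl_one_def cl_one mon_def)
lemma phi_X: "phi weyl_X = Tl"
  unfolding phi_def supp_X by (simp add: weyl_X_def cl_one mon_def)
lemma phi_Y: "phi weyl_Y = Dl"
  unfolding phi_def supp_Y by (simp add: weyl_Y_def cl_one mon_def)
lemma phi_zero: "phi weyl_zero = 0"
  by (simp add: phi_def supp_zero)

lemma pderiv_pow_monom:
  "(pderiv ^^ j) (monom (1::'a::field) n) = monom (\<Prod>k<j. of_nat (n - k)) (n - j)"
proof (induction j)
  case 0 then show ?case by simp
next
  case (Suc j)
  then show ?case by (simp add: pderiv_monom mult.commute)
qed

lemma app_Dl_fun: "app Dl = pderiv" by (rule ext) simp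

lemma app_mon: "app (mon i j) q = monom 1 i * (pderiv ^^ j) q"
  unfolding mon_def app_mult Tl_pow by (simp add: app_Dl_fun)

lemma phi_inj0:
  fixes f :: "'a::field_char_0 weyl"
  assumes f: "f \<in> weyl_carrier" and z: "phi f = 0"
  shows "f = weyl_zero"
proof (rule ccontr)
  assume "f \<noteq> weyl_zero"
  then have ne: "weyl_supp f \<noteq> {}" by (auto simp: weyl_supp_def weyl_zero_def fun_eq_iff)
  have fin: "finite (weyl_supp f)" using f carrier_finite by auto
  define j0 where "j0 = Min (snd ` weyl_supp f)"
  have "j0 \<in> snd ` weyl_supp f" unfolding j0_def using fin ne by (intro Min_in) auto
  then obtain i0 where i0: "(i0, j0) \<in> weyl_supp f" by auto
  have jmin: "j0 \<le> snd p" if "p \<in> weyl_supp f" for p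
    unfolding j0_def using fin that by (intro Min_le) auto
  define ff where "ff j = (\<Prod>k<j. of_nat (j0 - k) :: 'a)" for j
  have ffz: "ff j = 0" if "j > j0" for j
    unfolding ff_def using that by (intro prod_zero) (auto intro: bexI[of _ j0])
  have ffnz: "ff j0 \<noteq> 0" unfolding ff_def by (simp add: prod_zero_iff)
  have "0 = coeff (app (phi f) (monom 1 j0)) i0" using z by simp
  also have "\<dots> = (\<Sum>p\<in>weyl_supp f. f (fst p) (snd p) * (if i0 = fst p + (j0 - snd p) then ff (snd p) else 0))"
    unfolding phi_def app_sum ff_def
    by (simp add: coeff_sum app_mon pderiv_pow_monom mult_monom coeff_monom ff_def eq_commute[of i0])
  also have "\<dots> = (\<Sum>p\<in>weyl_supp f. if p = (i0, j0) then f i0 j0 * ff j0 else 0)"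
  proof (intro sum.cong refl)
    fix p assume p: "p \<in> weyl_supp f"
    show "f (fst p) (snd p) * (if i0 = fst p + (j0 - snd p) then ff (snd p) else 0) = (if p = (i0, j0) then f i0 j0 * ff j0 else 0)"
    proof (cases "snd p = j0")
      case True then show ?thesis by (cases p) auto
    next
      case False
      then have "snd p > j0" using jmin[OF p] by simp
      then show ?thesis using ffz by (cases p) auto
    qed
  qed
  also have "\<dots> = f i0 j0 * ff j0" using i0 fin by (simp add: sum.delta')
  finally show False using i0 ffnz by (simp add: weyl_supp_def)
qed

lemma phi_inj:
  fixes f g :: "'a::field_char_0 weyl"
  assumes "f \<in> weyl_carrier" "g \<in> weyl_carrier" "phi f = phi g"
  shows "f = g"
proof -
  have "weyl_sub f g = weyl_zero"
    using assms by (intro phi_inj0) (simp_all add: sub_carrier phi_sub)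
  then show ?thesis by (auto simp: fun_eq_iff weyl_sub_def weyl_zero_def)
qed



typedef (overloaded) 'a wa = "weyl_carrier :: 'a::field_char_0 weyl set"
  morphisms rep wabs
  using zero_carrier by blast

setup_lifting type_definition_wa

lemma rep_carrier: "rep a \<in> weyl_carrier" using rep by blast

definition phw :: "'a::field_char_0 wa \<Rightarrow> 'a lop" where "phw a = phi (rep a)"

lemma phw_inj: "phw a = phw b \<Longrightarrow> a = b"
  unfolding phw_def by (metis phi_inj rep_carrier rep_inject)

instantiation wa :: (field_char_0) ring_1
begin
lift_definition zero_wa :: "'a wa" is weyl_zero by (rule zero_carrier)
lift_definition one_wa :: "'a wa" is weyl_one by (rule one_carrier)
lift_definition plus_wa :: "'a wa \<Rightarrow> 'a wa \<Rightarrow> 'a wa" is weyl_add by (rule add_carrier)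
lift_definition minus_wa :: "'a wa \<Rightarrow> 'a wa \<Rightarrow> 'a wa" is weyl_sub by (rule sub_carrier)
lift_definition uminus_wa :: "'a wa \<Rightarrow> 'a wa" is "weyl_smult (-1)" by (rule smult_carrier)
lift_definition times_wa :: "'a wa \<Rightarrow> 'a wa \<Rightarrow> 'a wa" is weyl_mult by (rule mult_carrier)

lemma phw_zero0: "phw (0::'a wa) = 0" by (simp add: phw_def zero_wa.rep_eq phi_zero)
lemma phw_one0: "phw (1::'a wa) = 1" by (simp add: phw_def one_wa.rep_eq phi_one)
lemma phw_add0: "phw (a + b) = phw a + phw b" by (simp add: phw_def plus_wa.rep_eq phi_add rep_carrier)
lemma phw_sub0: "phw (a - b) = phw a - phw b" by (simp add: phw_def minus_wa.rep_eq phi_sub rep_carrier)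
lemma phw_uminus0: "phw (- a) = - phw a"
proof -
  have aum: "app (- F) p = - app F p" for F :: "'a lop" and p by transfer simp
  have "cl (-1) = (-1 :: 'a lop)" by (rule app_eqI) (simp add: aum)
  then show ?thesis by (simp add: phw_def uminus_wa.rep_eq phi_smult rep_carrier)
qed
lemma phw_mult0: "phw (a * b) = phw a * phw b" by (simp add: phw_def times_wa.rep_eq phi_mult rep_carrier)

instance
proof
  fix a b c :: "'a wa"
  show "a + b + c = a + (b + c)" by (rule phw_inj) (simp add: phw_add0 add.assoc)
  show "a + b = b + a" by (rule phw_inj) (simp add: phw_add0 add.commute)
  show "0 + a = a" by (rule phw_inj) (simp add: phw_add0 phw_zero0)
  show "- a + a = 0" by (rule phw_inj) (simp add: phw_add0 phw_zero0 phw_uminus0)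
  show "a - b = a + - b" by (rule phw_inj) (simp add: phw_add0 phw_sub0 phw_uminus0)
  show "a * b * c = a * (b * c)" by (rule phw_inj) (simp add: phw_mult0 mult.assoc)
  show "1 * a = a" by (rule phw_inj) (simp add: phw_mult0 phw_one0)
  show "a * 1 = a" by (rule phw_inj) (simp add: phw_mult0 phw_one0)
  show "(a + b) * c = a * c + b * c" by (rule phw_inj) (simp add: phw_mult0 phw_add0 distrib_right)
  show "a * (b + c) = a * b + a * c" by (rule phw_inj) (simp add: phw_mult0 phw_add0 distrib_left)
  show "(0::'a wa) \<noteq> 1"
  proof
    assume "(0::'a wa) = 1"
    then have "phw (0::'a wa) = phw 1" by simp
    then show False by (simp add: phw_zero0 phw_one0)
  qed
qed
end

lemmas phw_zero = phw_zero0 and phw_one = phw_one0 and phw_add = phw_add0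
  and phw_sub = phw_sub0 and phw_mult = phw_mult0 and phw_uminus = phw_uminus0

lift_definition cw :: "'a::field_char_0 \<Rightarrow> 'a wa" is "\<lambda>c. weyl_smult c weyl_one"
  by (rule smult_carrier[OF one_carrier])
lift_definition Xw :: "'a::field_char_0 wa" is weyl_X by (rule X_carrier)
lift_definition Yw :: "'a::field_char_0 wa" is weyl_Y by (rule Y_carrier)

lemma phw_cw: "phw (cw c) = cl c"
  by (simp add: phw_def cw.rep_eq phi_smult one_carrier phi_one)
lemma phw_Xw: "phw Xw = Tl" by (simp add: phw_def Xw.rep_eq phi_X)
lemma phw_Yw: "phw Yw = Dl" by (simp add: phw_def Yw.rep_eq phi_Y)

lemma phw_pow: "phw (a ^ n) = phw a ^ n"
  by (induction n) (simp_all add: phw_one phw_mult)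
lemma phw_sum: "phw (sum f S) = (\<Sum>s\<in>S. phw (f s))"
  by (induction S rule: infinite_finite_induct) (simp_all add: phw_zero phw_add)
lemma phw_of_nat: "phw (of_nat n) = of_nat n"
  by (induction n) (simp_all add: phw_zero phw_one phw_add)

lemma YX_rel: "Yw * Xw = Xw * Yw + (1::'a::field_char_0 wa)"
  by (rule phw_inj) (simp add: phw_mult phw_add phw_one phw_Xw phw_Yw DT_rel)

lemma cw_comm: "cw c * a = a * cw c"
  by (rule phw_inj) (simp add: phw_mult phw_cw cl_comm)
lemma cw_mult: "cw (a * b) = cw a * cw b"
  by (rule phw_inj) (simp add: phw_mult phw_cw cl_mult)
lemma cw_add: "cw (a + b) = cw a + cw b"
  by (rule phw_inj) (simp add: phw_add phw_cw cl_add)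
lemma cw_one: "cw 1 = 1"
  by (rule phw_inj) (simp add: phw_one phw_cw cl_one)
lemma cw_zero: "cw 0 = 0"
  by (rule phw_inj) (simp add: phw_zero phw_cw cl_zero)
lemma cw_of_nat: "cw (of_nat n) = of_nat n"
  by (rule phw_inj) (simp add: phw_of_nat phw_cw cl_of_nat)
lemma cw_sum: "cw (sum f S) = (\<Sum>s\<in>S. cw (f s))"
  by (induction S rule: infinite_finite_induct) (simp_all add: cw_zero cw_add)
lemma cw_mid: "A * (cw c * B) = cw c * (A * B)"
  by (metis mult.assoc cw_comm)

lemma rep_add: "rep (a + b) = weyl_add (rep a) (rep b)" by (rule plus_wa.rep_eq)
lemma rep_sub: "rep (a - b) = weyl_sub (rep a) (rep b)" by (rule minus_wa.rep_eq)
lemma rep_mult: "rep (a * b) = weyl_mult (rep a) (rep b)" by (rule times_wa.rep_eq)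
lemma rep_one: "rep 1 = weyl_one" by (rule one_wa.rep_eq)
lemma rep_zero: "rep 0 = weyl_zero" by (rule zero_wa.rep_eq)
lemma rep_cw_mult: "rep (cw c * a) = weyl_smult c (rep a)"
proof -
  have "phi (rep (cw c * a)) = phi (weyl_smult c (rep a))"
    using phw_mult[of "cw c" a] by (simp add: phw_def[symmetric] phw_cw phi_smult rep_carrier)
  then show ?thesis by (rule phi_inj[OF rep_carrier smult_carrier[OF rep_carrier]])
qed
lemma rep_sum: "rep (sum f S) i j = (\<Sum>s\<in>S. rep (f s) i j)"
  by (induction S rule: infinite_finite_induct) (simp_all add: rep_zero rep_add weyl_zero_def weyl_add_def)

lemma rep_mon: "rep (Xw ^ i * Yw ^ j) = (\<lambda>a b. if a = i \<and> b = j then 1 else 0)"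
proof -
  let ?m = "(\<lambda>a b. if a = i \<and> b = j then 1 else 0) :: 'a weyl"
  have supp: "weyl_supp ?m = {(i,j)}" by (auto simp: weyl_supp_def split: if_splits)
  then have car: "?m \<in> weyl_carrier" by (simp add: weyl_carrier_def)
  have "phi ?m = mon i j" unfolding phi_def supp by (simp add: cl_one)
  then have "phi (rep (Xw ^ i * Yw ^ j)) = phi ?m"
    using phw_mult[of "Xw ^ i" "Yw ^ j"] by (simp add: phw_def[symmetric] phw_pow phw_Xw phw_Yw mon_def)
  then show ?thesis by (rule phi_inj[OF rep_carrier car])
qed

lemma expand:
  assumes "finite S" "weyl_supp (rep a) \<subseteq> S"
  shows "a = (\<Sum>p\<in>S. cw (rep a (fst p) (snd p)) * (Xw ^ fst p * Yw ^ snd p))"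
proof (rule phw_inj)
  show "phw a = phw (\<Sum>p\<in>S. cw (rep a (fst p) (snd p)) * (Xw ^ fst p * Yw ^ snd p))"
    unfolding phw_sum phw_def[of a] phi_superset[OF assms]
    by (simp add: phw_mult phw_cw phw_pow phw_Xw phw_Yw mon_def)
qed



definition ev :: "'a::field_char_0 wa \<Rightarrow> 'a wa \<Rightarrow> 'a wa \<Rightarrow> 'a wa" where
  "ev x y z = (\<Sum>p\<in>weyl_supp (rep z). cw (rep z (fst p) (snd p)) * (x ^ fst p * y ^ snd p))"

lemma rep_finite: "finite (weyl_supp (rep z))" using rep_carrier carrier_finite by blast

lemma ev_superset:
  assumes "finite S" "weyl_supp (rep z) \<subseteq> S"
  shows "ev x y z = (\<Sum>p\<in>S. cw (rep z (fst p) (snd p)) * (x ^ fst p * y ^ snd p))"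
  unfolding ev_def
  by (rule sum.mono_neutral_left[OF assms]) (auto simp: supp_iff cw_zero)

lemma ev_add: "ev x y (a + b) = ev x y a + ev x y b"
proof -
  let ?S = "weyl_supp (rep a) \<union> weyl_supp (rep b)"
  have fin: "finite ?S" using rep_finite by auto
  have s: "weyl_supp (rep (a + b)) \<subseteq> ?S" using supp_add by (simp add: rep_add)
  show ?thesis
    unfolding ev_superset[OF fin s] ev_superset[OF fin Un_upper1] ev_superset[OF fin Un_upper2]
    by (simp add: rep_add weyl_add_def cw_add distrib_right sum.distrib)
qed

lemma ev_zero: "ev x y 0 = 0"
  by (simp add: ev_def rep_zero supp_zero)

lemma ev_sum: "ev x y (sum f S) = (\<Sum>s\<in>S. ev x y (f s))"
  by (induction S rule: infinite_finite_induct) (simp_all add: ev_zero ev_add)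

lemma ev_cw_mult: "ev x y (cw c * a) = cw c * ev x y a"
proof -
  have fin: "finite (weyl_supp (rep a))" by (rule rep_finite)
  have s: "weyl_supp (rep (cw c * a)) \<subseteq> weyl_supp (rep a)" by (simp add: rep_cw_mult supp_smult)
  show ?thesis
    unfolding ev_superset[OF fin s] ev_superset[OF fin order_refl]
    by (simp add: rep_cw_mult weyl_smult_def cw_mult sum_distrib_left mult.assoc)
qed

lemma ev_of_nat_mult: "ev x y (of_nat k * a) = of_nat k * ev x y a"
  using ev_cw_mult[of x y "of_nat k" a] by (simp add: cw_of_nat)

lemma ev_mon: "ev x y (Xw ^ i * Yw ^ j) = x ^ i * y ^ j"
proof -
  have s: "weyl_supp (rep (Xw ^ i * Yw ^ j) :: 'a weyl) = {(i,j)}"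
    by (auto simp: rep_mon weyl_supp_def split: if_splits)
  show ?thesis unfolding ev_def s by (simp add: rep_mon cw_one)
qed

lemma ev_one: "ev x y 1 = 1" using ev_mon[of x y 0 0] by simp
lemma ev_X: "ev x y Xw = x" using ev_mon[of x y 1 0] by simp
lemma ev_Y: "ev x y Yw = y" using ev_mon[of x y 0 1] by simp
lemma ev_cw: "ev x y (cw c) = cw c" using ev_cw_mult[of x y c 1] by (simp add: ev_one)

lemma mon4:
  fixes u v :: "'r::ring_1"
  assumes r: "v * u = u * v + 1"
  shows "(u ^ a * v ^ b) * (u ^ c * v ^ d) =
    (\<Sum>l\<le>b. of_nat ((b choose l) * (c choose l) * fact l) * (u ^ (a + (c - l)) * v ^ (b - l + d)))"
proof -
  have "(u ^ a * v ^ b) * (u ^ c * v ^ d) = u ^ a * (v ^ b * u ^ c) * v ^ d" by (simp add: mult.assoc)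
  also have "\<dots> = (\<Sum>l\<le>b. u ^ a * (of_nat ((b choose l) * (c choose l) * fact l) * (u ^ (c - l) * v ^ (b - l))) * v ^ d)"
    unfolding nord2[OF r] by (simp add: sum_distrib_left sum_distrib_right)
  also have "\<dots> = (\<Sum>l\<le>b. of_nat ((b choose l) * (c choose l) * fact l) * (u ^ (a + (c - l)) * v ^ (b - l + d)))"
    by (intro sum.cong refl) (simp only: of_nat_mid mult.assoc power_add)
  finally show ?thesis .
qed

lemma cw_pair: "(cw a * M) * (cw b * N) = cw (a * b) * (M * N)"
  by (rule phw_inj, simp add: phw_mult phw_cw, rule app_eqI, simp add: app_smult mult.commute)

lemma ev_mult:
  assumes r: "y * x = x * y + 1"
  shows "ev x y (a * b) = ev x y a * ev x y b"
proof -
  let ?m = "\<lambda>p. Xw ^ fst p * Yw ^ snd p :: 'a wa"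
  let ?Sa = "weyl_supp (rep a)" and ?Sb = "weyl_supp (rep b)"
  have emm: "ev x y (?m p * ?m q) = ev x y (?m p) * ev x y (?m q)" for p q
    unfolding mon4[OF YX_rel] mon4[OF r] ev_sum ev_of_nat_mult ev_mon by simp
  have ea: "a = (\<Sum>p\<in>?Sa. cw (rep a (fst p) (snd p)) * ?m p)" by (rule expand[OF rep_finite order_refl])
  have eb: "b = (\<Sum>q\<in>?Sb. cw (rep b (fst q) (snd q)) * ?m q)" by (rule expand[OF rep_finite order_refl])
  have "a * b = (\<Sum>p\<in>?Sa. \<Sum>q\<in>?Sb. cw (rep a (fst p) (snd p) * rep b (fst q) (snd q)) * (?m p * ?m q))"
    by (subst ea, subst eb) (simp add: sum_product cw_pair)
  then have "ev x y (a * b) = (\<Sum>p\<in>?Sa. \<Sum>q\<in>?Sb. cw (rep a (fst p) (snd p) * rep b (fst q) (snd q)) * (ev x y (?m p) * ev x y (?m q)))"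
    by (simp add: ev_sum ev_cw_mult emm)
  also have "\<dots> = (\<Sum>p\<in>?Sa. cw (rep a (fst p) (snd p)) * ev x y (?m p)) * (\<Sum>q\<in>?Sb. cw (rep b (fst q) (snd q)) * ev x y (?m q))"
    by (simp add: sum_product cw_pair)
  also have "\<dots> = ev x y a * ev x y b"
    by (simp only: ev_mon) (simp add: ev_def)
  finally show ?thesis .
qed



lemma rep_lin_mon:
  "rep (\<Sum>p\<in>S. cw (c p) * (Xw ^ g1 p * Yw ^ g2 p)) i j = (\<Sum>p\<in>S. if g1 p = i \<and> g2 p = j then c p else 0)"
  by (simp add: rep_sum rep_cw_mult rep_mon weyl_smult_def) (intro sum.cong refl, auto)

lemma YXpow: "Yw * Xw ^ a = Xw ^ a * Yw + of_nat a * Xw ^ (a - 1)"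
proof -
  have "Yw ^ 1 * Xw ^ a = (\<Sum>l\<le>1. of_nat ((1 choose l) * (a choose l) * fact l) * (Xw ^ (a - l) * Yw ^ (1 - l)))"
    by (rule nord2[OF YX_rel])
  then show ?thesis by simp
qed

lemma sum_delta_pair:
  assumes "finite S"
  shows "(\<Sum>p\<in>S. if p = p0 then F p else 0) = (if p0 \<in> S then F p0 else 0)"
  using assms by (simp add: sum.delta')

lemma comm_X_coeff:
  "rep (z * Xw - Xw * z) i j = of_nat (Suc j) * rep z i (Suc j)"
proof -
  let ?S = "weyl_supp (rep z)"
  let ?c = "\<lambda>p. rep z (fst p) (snd p)"
  have ez: "z = (\<Sum>p\<in>?S. cw (?c p) * (Xw ^ fst p * Yw ^ snd p))" by (rule expand[OF rep_finite order_refl])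
  have "z * Xw - Xw * z = (\<Sum>p\<in>?S. cw (?c p) * ((Xw ^ fst p * Yw ^ snd p) * Xw - Xw * (Xw ^ fst p * Yw ^ snd p)))"
    apply (subst (1 2) ez)
    by (simp add: sum_distrib_right sum_distrib_left sum_subtractf right_diff_distrib mult.assoc cw_mid[of Xw] cw_mid[of Yw])
  also have "\<dots> = (\<Sum>p\<in>?S. cw (?c p * of_nat (snd p)) * (Xw ^ fst p * Yw ^ (snd p - 1)))"
  proof (intro sum.cong refl)
    fix p
    have "(Xw ^ fst p * Yw ^ snd p) * Xw - Xw * (Xw ^ fst p * Yw ^ snd p) = Xw ^ fst p * (Yw ^ snd p * Xw) - Xw ^ fst p * Xw * Yw ^ snd p"
      by (simp add: mult.assoc power_commutes)
    also have "\<dots> = of_nat (snd p) * (Xw ^ fst p * Yw ^ (snd p - 1))"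
      unfolding nord1[OF YX_rel] by (simp add: distrib_left mult.assoc of_nat_mid)
    finally have eq: "(Xw ^ fst p * Yw ^ snd p) * Xw - Xw * (Xw ^ fst p * Yw ^ snd p) = of_nat (snd p) * (Xw ^ fst p * Yw ^ (snd p - 1))" .
    show "cw (?c p) * ((Xw ^ fst p * Yw ^ snd p) * Xw - Xw * (Xw ^ fst p * Yw ^ snd p)) =
        cw (?c p * of_nat (snd p)) * (Xw ^ fst p * Yw ^ (snd p - 1))"
      unfolding eq by (simp only: cw_mult cw_of_nat mult.assoc)
  qed
  finally have "rep (z * Xw - Xw * z) i j = (\<Sum>p\<in>?S. if fst p = i \<and> snd p - 1 = j then ?c p * of_nat (snd p) else 0)"
    by (simp add: rep_lin_mon)
  also have "\<dots> = (\<Sum>p\<in>?S. if p = (i, Suc j) then ?c p * of_nat (snd p) else 0)"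
    by (intro sum.cong refl) (auto)
  also have "\<dots> = of_nat (Suc j) * rep z i (Suc j)"
    by (simp add: sum_delta_pair[OF rep_finite] supp_iff mult.commute)
  finally show ?thesis .
qed

lemma comm_Y_coeff:
  "rep (Yw * z - z * Yw) i j = of_nat (Suc i) * rep z (Suc i) j"
proof -
  let ?S = "weyl_supp (rep z)"
  let ?c = "\<lambda>p. rep z (fst p) (snd p)"
  have ez: "z = (\<Sum>p\<in>?S. cw (?c p) * (Xw ^ fst p * Yw ^ snd p))" by (rule expand[OF rep_finite order_refl])
  have "Yw * z - z * Yw = (\<Sum>p\<in>?S. cw (?c p) * (Yw * (Xw ^ fst p * Yw ^ snd p) - (Xw ^ fst p * Yw ^ snd p) * Yw))"
    apply (subst (1 2) ez)
    by (simp add: sum_distrib_right sum_distrib_left sum_subtractf right_diff_distrib mult.assoc cw_mid[of Xw] cw_mid[of Yw])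
  also have "\<dots> = (\<Sum>p\<in>?S. cw (?c p * of_nat (fst p)) * (Xw ^ (fst p - 1) * Yw ^ snd p))"
  proof (intro sum.cong refl)
    fix p
    have "Yw * (Xw ^ fst p * Yw ^ snd p) - (Xw ^ fst p * Yw ^ snd p) * Yw = (Yw * Xw ^ fst p) * Yw ^ snd p - Xw ^ fst p * Yw * Yw ^ snd p"
      by (simp add: mult.assoc power_commutes)
    also have "\<dots> = of_nat (fst p) * (Xw ^ (fst p - 1) * Yw ^ snd p)"
      unfolding YXpow by (simp add: distrib_right mult.assoc)
    finally have eq: "Yw * (Xw ^ fst p * Yw ^ snd p) - (Xw ^ fst p * Yw ^ snd p) * Yw = of_nat (fst p) * (Xw ^ (fst p - 1) * Yw ^ snd p)" .
    show "cw (?c p) * (Yw * (Xw ^ fst p * Yw ^ snd p) - (Xw ^ fst p * Yw ^ snd p) * Yw) =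
        cw (?c p * of_nat (fst p)) * (Xw ^ (fst p - 1) * Yw ^ snd p)"
      unfolding eq by (simp only: cw_mult cw_of_nat mult.assoc)
  qed
  finally have "rep (Yw * z - z * Yw) i j = (\<Sum>p\<in>?S. if fst p - 1 = i \<and> snd p = j then ?c p * of_nat (fst p) else 0)"
    by (simp add: rep_lin_mon)
  also have "\<dots> = (\<Sum>p\<in>?S. if p = (Suc i, j) then ?c p * of_nat (fst p) else 0)"
    by (intro sum.cong refl) (auto)
  also have "\<dots> = of_nat (Suc i) * rep z (Suc i) j"
    by (simp add: sum_delta_pair[OF rep_finite] supp_iff mult.commute)
  finally show ?thesis .
qed



lemma sucnz[simp]: "(1::'a::field_char_0) + of_nat i \<noteq> 0"
  by (metis of_nat_Suc of_nat_eq_0_iff nat.distinct(1))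

lemma rep_cw00: "rep (cw c) 0 0 = c"
  by (simp add: cw.rep_eq weyl_smult_def weyl_one_def)

lemma const_form:
  assumes "\<forall>i j. rep z (Suc i) j = 0 \<and> rep z i (Suc j) = 0"
  shows "z = cw (rep z 0 0)"
proof -
  have s: "weyl_supp (rep z) \<subseteq> {(0,0)}"
  proof
    fix p assume p: "p \<in> weyl_supp (rep z)"
    obtain i j where pij: "p = (i, j)" by (cases p)
    have "rep z i j \<noteq> 0" using p pij by (simp add: supp_iff)
    then have "i = 0" "j = 0" using assms
      by (metis not0_implies_Suc)+
    then show "p \<in> {(0,0)}" using pij by simp
  qed
  show ?thesis by (subst expand[OF _ s]) (simp_all add: cw_one)
qed

lemma ev_diff: "ev x y (a - b) = ev x y a - ev x y b"
  using ev_add[of x y "a - b" b] by simp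

lemma ev_inj0:
  assumes r: "y * x = x * y + 1" and z: "ev x y z = 0"
  shows "z = 0"
proof -
  have base: "w = 0" if c: "\<forall>i j. rep w (Suc i) j = 0 \<and> rep w i (Suc j) = 0" and e: "ev x y w = 0" for w
  proof -
    have w: "w = cw (rep w 0 0)" by (rule const_form[OF c])
    then have "cw (rep w 0 0) = 0" using e by (metis ev_cw)
    then have "rep w 0 0 = 0" by (metis rep_cw00 rep_zero weyl_zero_def)
    then show ?thesis using w by (simp add: cw_zero)
  qed
  have main: "\<forall>w. (\<forall>p\<in>weyl_supp (rep w). fst p + snd p \<le> n) \<longrightarrow> ev x y w = 0 \<longrightarrow> w = 0" for n
  proof (induction n)
    case 0
    show ?case
    proof (intro allI impI)
      fix w assume b: "\<forall>p\<in>weyl_supp (rep w). fst p + snd p \<le> 0" and e: "ev x y w = 0"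
      have "\<forall>i j. rep w (Suc i) j = 0 \<and> rep w i (Suc j) = 0"
      proof (intro allI conjI)
        fix i j
        show "rep w (Suc i) j = 0" using b[rule_format, of "(Suc i, j)"] by (auto simp: supp_iff)
        show "rep w i (Suc j) = 0" using b[rule_format, of "(i, Suc j)"] by (auto simp: supp_iff)
      qed
      then show "w = 0" using base e by blast
    qed
  next
    case (Suc n)
    show ?case
    proof (intro allI impI)
      fix w assume b: "\<forall>p\<in>weyl_supp (rep w). fst p + snd p \<le> Suc n" and e: "ev x y w = 0"
      define w1 where "w1 = w * Xw - Xw * w"
      define w2 where "w2 = Yw * w - w * Yw"
      have e1: "ev x y w1 = 0" unfolding w1_def by (simp add: ev_diff ev_mult[OF r] e)
      have e2: "ev x y w2 = 0" unfolding w2_def by (simp add: ev_diff ev_mult[OF r] e)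
      have b1: "\<forall>p\<in>weyl_supp (rep w1). fst p + snd p \<le> n"
      proof
        fix p assume "p \<in> weyl_supp (rep w1)"
        then have "rep w (fst p) (Suc (snd p)) \<noteq> 0" unfolding w1_def supp_iff comm_X_coeff by simp
        then show "fst p + snd p \<le> n" using b[rule_format, of "(fst p, Suc (snd p))"] by (simp add: supp_iff)
      qed
      have b2: "\<forall>p\<in>weyl_supp (rep w2). fst p + snd p \<le> n"
      proof
        fix p assume "p \<in> weyl_supp (rep w2)"
        then have "rep w (Suc (fst p)) (snd p) \<noteq> 0" unfolding w2_def supp_iff comm_Y_coeff by simp
        then show "fst p + snd p \<le> n" using b[rule_format, of "(Suc (fst p), snd p)"] by (simp add: supp_iff)
      qed
      have "w1 = 0" using Suc.IH b1 e1 by blast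
      have "w2 = 0" using Suc.IH b2 e2 by blast
      have "\<forall>i j. rep w (Suc i) j = 0 \<and> rep w i (Suc j) = 0"
      proof (intro allI conjI)
        fix i j
        have "rep w2 i j = 0" using \<open>w2 = 0\<close> by (simp add: rep_zero weyl_zero_def)
        then show "rep w (Suc i) j = 0" unfolding w2_def comm_Y_coeff by simp
        have "rep w1 i j = 0" using \<open>w1 = 0\<close> by (simp add: rep_zero weyl_zero_def)
        then show "rep w i (Suc j) = 0" unfolding w1_def comm_X_coeff by simp
      qed
      then show "w = 0" using base e by blast
    qed
  qed
  obtain N where N: "\<forall>p\<in>weyl_supp (rep z). fst p \<le> N \<and> snd p \<le> N"
    using finite_box[OF rep_finite] by blast
  then have "\<forall>p\<in>weyl_supp (rep z). fst p + snd p \<le> 2 * N" by force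
  then show ?thesis using main z by blast
qed

lemma ev_inj:
  assumes r: "y * x = x * y + 1" and e: "ev x y a = ev x y b"
  shows "a = b"
  using ev_inj0[OF r, of "a - b"] e by (simp add: ev_diff)

lemma ev_pow:
  assumes r: "y * x = x * y + 1"
  shows "ev x y (a ^ n) = ev x y a ^ n"
  by (induction n) (simp_all add: ev_one ev_mult[OF r])

lemma ev_comp:
  assumes r: "y * x = x * y + 1"
  shows "ev x y (ev u v z) = ev (ev x y u) (ev x y v) z"
  unfolding ev_def[of u v z] ev_def[of "ev x y u" "ev x y v" z]
  by (simp add: ev_sum ev_cw_mult ev_mult[OF r] ev_pow[OF r])

lemma ev_id: "ev Xw Yw z = z"
  unfolding ev_def by (rule expand[OF rep_finite order_refl, symmetric])

lemma wabs_mult: "f \<in> weyl_carrier \<Longrightarrow> g \<in> weyl_carrier \<Longrightarrow> wabs (weyl_mult f g) = wabs f * wabs g"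
  by (metis rep_mult wabs_inverse rep_inverse)
lemma wabs_add: "f \<in> weyl_carrier \<Longrightarrow> g \<in> weyl_carrier \<Longrightarrow> wabs (weyl_add f g) = wabs f + wabs g"
  by (metis rep_add wabs_inverse rep_inverse)
lemma wabs_smult: "f \<in> weyl_carrier \<Longrightarrow> wabs (weyl_smult c f) = cw c * wabs f"
  by (metis rep_cw_mult wabs_inverse rep_inverse)
lemma wabs_one: "wabs weyl_one = 1" by (metis rep_one rep_inverse)

lemma auto_ev:
  assumes r: "y * x = x * y + 1" and u: "ev x y u = Xw" and v: "ev x y v = Yw"
  shows "weyl_K_automorphism (\<lambda>f. rep (ev x y (wabs f)))"
proof -
  let ?t = "\<lambda>f. rep (ev x y (wabs f))"
  have iso: "?t \<in> ring_iso weyl_ring weyl_ring"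
  proof (rule ring_iso_memI)
    show "?t a \<in> carrier weyl_ring" for a by (simp add: weyl_ring_def rep_carrier)
    show "?t (a \<otimes>\<^bsub>weyl_ring\<^esub> b) = ?t a \<otimes>\<^bsub>weyl_ring\<^esub> ?t b"
      if "a \<in> carrier weyl_ring" "b \<in> carrier weyl_ring" for a b
      using that by (simp add: weyl_ring_def wabs_mult ev_mult[OF r] rep_mult)
    show "?t (a \<oplus>\<^bsub>weyl_ring\<^esub> b) = ?t a \<oplus>\<^bsub>weyl_ring\<^esub> ?t b"
      if "a \<in> carrier weyl_ring" "b \<in> carrier weyl_ring" for a b
      using that by (simp add: weyl_ring_def wabs_add ev_add rep_add)
    show "?t \<one>\<^bsub>weyl_ring\<^esub> = \<one>\<^bsub>weyl_ring\<^esub>"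
      by (simp add: weyl_ring_def wabs_one ev_one rep_one)
    show "bij_betw ?t (carrier weyl_ring) (carrier weyl_ring)"
      unfolding bij_betw_def
    proof
      show "inj_on ?t (carrier weyl_ring)"
      proof
        fix a b :: "'a weyl" assume a: "a \<in> carrier weyl_ring" and b: "b \<in> carrier weyl_ring" and e: "?t a = ?t b"
        then have "wabs a = wabs b" using ev_inj[OF r] by (metis rep_inject)
        then show "a = b" using a b by (simp add: weyl_ring_def wabs_inject)
      qed
      show "?t ` carrier weyl_ring = carrier weyl_ring"
      proof
        show "?t ` carrier weyl_ring \<subseteq> carrier weyl_ring" by (auto simp: weyl_ring_def rep_carrier)
        show "carrier weyl_ring \<subseteq> ?t ` carrier weyl_ring"
        proof
          fix h :: "'a weyl" assume h: "h \<in> carrier weyl_ring"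
          define w where "w = ev u v (wabs h)"
          have "ev x y w = wabs h" unfolding w_def ev_comp[OF r] u v ev_id ..
          then have "?t (rep w) = h" using h by (simp add: rep_inverse weyl_ring_def wabs_inverse)
          moreover have "rep w \<in> carrier weyl_ring" by (simp add: weyl_ring_def rep_carrier)
          ultimately show "h \<in> ?t ` carrier weyl_ring" by (metis image_eqI)
        qed
      qed
    qed
  qed
  have lin: "\<forall>c. \<forall>f\<in>weyl_carrier. ?t (weyl_smult c f) = weyl_smult c (?t f)"
    by (simp add: wabs_smult ev_cw_mult rep_cw_mult)
  show ?thesis unfolding weyl_K_automorphism_def using iso lin by blast
qed



definition Mc :: "'a::field weyl \<Rightarrow> nat \<Rightarrow> nat \<Rightarrow> 'a" where
  "Mc f n m = coeff (app (phi f) (monom 1 n)) m"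

definition ffp :: "nat \<Rightarrow> 'a::field poly" where
  "ffp j = (\<Prod>k<j. [:- of_nat k, 1:])"

definition Pol :: "'a::field weyl \<Rightarrow> int \<Rightarrow> 'a poly" where
  "Pol f d = (\<Sum>p\<in>weyl_supp f. if int (fst p) - int (snd p) = d then smult (f (fst p) (snd p)) (ffp (snd p)) else 0)"

lemma prod_ff: "(\<Prod>k<j. (of_nat (n - k) :: 'a::field)) = (\<Prod>k<j. of_nat n - of_nat k)"
proof (cases "j \<le> n")
  case True
  then show ?thesis by (intro prod.cong refl) (simp add: of_nat_diff)
next
  case False
  then have "n \<in> {..<j}" by simp
  have "(\<Prod>k<j. (of_nat (n - k) :: 'a)) = 0"
    by (rule prod_zero) (simp, rule bexI[of _ n], simp, use False in simp)
  moreover have "(\<Prod>k<j. (of_nat n - of_nat k :: 'a)) = 0"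
    by (rule prod_zero) (simp, rule bexI[of _ n], simp, use False in simp)
  ultimately show ?thesis by (simp only:)
qed

lemma poly_ffp: "poly (ffp j) x = (\<Prod>k<j. x - of_nat k)"
  by (simp add: ffp_def poly_prod)

lemma ffp_zero: "j > 0 \<Longrightarrow> poly (ffp j) 0 = (0::'a::field)"
  unfolding poly_ffp by (rule prod_zero) (auto intro: bexI[of _ 0])

lemma Mc_Pol:
  assumes f: "f \<in> weyl_carrier"
  shows "Mc f n m = poly (Pol f (int m - int n)) (of_nat n)"
proof -
  have "Mc f n m = (\<Sum>p\<in>weyl_supp f. f (fst p) (snd p) * (if m = fst p + (n - snd p) then (\<Prod>k<snd p. of_nat (n - k)) else 0))"
    unfolding Mc_def phi_def app_sum
    by (simp add: coeff_sum app_mon pderiv_pow_monom mult_monom coeff_monom eq_commute[of m])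
  also have "\<dots> = poly (Pol f (int m - int n)) (of_nat n)"
    unfolding Pol_def poly_sum
  proof (intro sum.cong refl)
    fix p
    show "f (fst p) (snd p) * (if m = fst p + (n - snd p) then (\<Prod>k<snd p. of_nat (n - k)) else 0) =
      poly (if int (fst p) - int (snd p) = int m - int n then smult (f (fst p) (snd p)) (ffp (snd p)) else 0) (of_nat n)"
    proof (cases "snd p \<le> n")
      case True
      then have "m = fst p + (n - snd p) \<longleftrightarrow> int (fst p) - int (snd p) = int m - int n" by linarith
      then show ?thesis by (simp add: poly_ffp prod_ff)
    next
      case False
      then have z: "(\<Prod>k<snd p. (of_nat (n - k) :: 'a)) = 0" "poly (ffp (snd p)) (of_nat n) = (0::'a)"
        unfolding poly_ffp prod_ff by (auto intro!: prod_zero bexI[of _ n])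
      show ?thesis using z by simp
    qed
  qed
  finally show ?thesis .
qed

lemma coeff_app_expand:
  assumes "degree q \<le> D"
  shows "coeff (app F q) m = (\<Sum>k\<le>D. coeff q k * coeff (app F (monom 1 k)) m)"
proof -
  have "q = (\<Sum>k\<le>D. smult (coeff q k) (monom 1 k))"
    using poly_as_sum_of_monoms'[OF assms] by (simp add: smult_monom)
  then have "app F q = (\<Sum>k\<le>D. smult (coeff q k) (app F (monom 1 k)))"
    by (metis (no_types, lifting) app_psum app_smult sum.cong)
  then show ?thesis by (simp add: coeff_sum)
qed

lemma Mc_mult:
  assumes "f \<in> weyl_carrier" "g \<in> weyl_carrier"
  shows "Mc (weyl_mult f g) n m = (\<Sum>k\<le>degree (app (phi g) (monom 1 n)). Mc g n k * Mc f k m)"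
  unfolding Mc_def phi_mult[OF assms] app_mult
  by (rule coeff_app_expand) simp

lemma Mc_sub:
  assumes "f \<in> weyl_carrier" "g \<in> weyl_carrier"
  shows "Mc (weyl_sub f g) n m = Mc f n m - Mc g n m"
  unfolding Mc_def phi_sub[OF assms] by simp

lemma Mc_one: "Mc weyl_one n m = (if m = n then 1 else 0)"
  unfolding Mc_def phi_one by (simp add: coeff_monom)

definition homog :: "'a::zero weyl \<Rightarrow> int \<Rightarrow> bool" where
  "homog f d \<longleftrightarrow> (\<forall>i j. f i j \<noteq> 0 \<longrightarrow> int i - int j = d)"

lemma Pol_homog: "homog f d \<Longrightarrow> e \<noteq> d \<Longrightarrow> Pol f e = 0"
  unfolding Pol_def homog_def by (intro sum.neutral) (auto simp: supp_iff)

lemma Mc_homog: "f \<in> weyl_carrier \<Longrightarrow> homog f d \<Longrightarrow> int m - int n \<noteq> d \<Longrightarrow> Mc f n m = 0"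
  by (simp add: Mc_Pol Pol_homog)

lemma sum_single:
  fixes a b :: "nat \<Rightarrow> 'a::field"
  assumes "\<And>k. k \<noteq> k0 \<Longrightarrow> a k * b k = 0" "k0 > D \<Longrightarrow> a k0 = 0"
  shows "(\<Sum>k\<le>D. a k * b k) = a k0 * b k0"
proof (cases "k0 \<le> D")
  case True
  have "(\<Sum>k\<le>D. a k * b k) = (\<Sum>k\<le>D. if k = k0 then a k0 * b k0 else 0)"
    by (intro sum.cong refl) (auto simp: assms(1))
  then show ?thesis using True by simp
next
  case False
  then show ?thesis using assms by (auto intro!: sum.neutral)
qed

lemma coeff_beyond: "degree (app (phi g) (monom 1 n)) < k \<Longrightarrow> Mc g n k = 0"
  unfolding Mc_def by (simp add: coeff_eq_0)

lemma Mc_mult_homL: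
  assumes P: "P \<in> weyl_carrier" "homog P d" and g: "g \<in> weyl_carrier" and nn: "int m - d \<ge> 0"
  shows "Mc (weyl_mult P g) n m = Mc g n (nat (int m - d)) * Mc P (nat (int m - d)) m"
  unfolding Mc_mult[OF P(1) g]
  apply (rule sum_single)
  subgoal for k using Mc_homog[OF P, of m k] nn by auto
  subgoal by (rule coeff_beyond)
  done

lemma Mc_mult_homL0:
  assumes P: "P \<in> weyl_carrier" "homog P d" and g: "g \<in> weyl_carrier" and nn: "int m - d < 0"
  shows "Mc (weyl_mult P g) n m = 0"
  unfolding Mc_mult[OF P(1) g]
  by (rule sum.neutral) (use nn in \<open>auto intro!: Mc_homog[OF P]\<close>)

lemma Mc_mult_homR:
  assumes P: "P \<in> weyl_carrier" "homog P d" and g: "g \<in> weyl_carrier" and nn: "int n + d \<ge> 0"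
  shows "Mc (weyl_mult g P) n m = Mc P n (nat (int n + d)) * Mc g (nat (int n + d)) m"
  unfolding Mc_mult[OF g P(1)]
  apply (rule sum_single)
  subgoal for k using Mc_homog[OF P, of k n] nn by auto
  subgoal by (rule coeff_beyond)
  done

lemma Mc_mult_homR0:
  assumes P: "P \<in> weyl_carrier" "homog P d" and g: "g \<in> weyl_carrier" and nn: "int n + d < 0"
  shows "Mc (weyl_mult g P) n m = 0"
  unfolding Mc_mult[OF g P(1)]
  by (rule sum.neutral) (use nn in \<open>auto intro!: Mc_homog[OF P]\<close>)



lemma poly_infinite_roots:
  fixes p :: "'a::field_char_0 poly"
  assumes "inj f" "\<And>k::nat. poly p (f k) = 0"
  shows "p = 0"
proof (rule ccontr)
  assume "p \<noteq> 0"
  then have "finite {x. poly p x = 0}" by (rule poly_roots_finite)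
  moreover have "range f \<subseteq> {x. poly p x = 0}" using assms(2) by auto
  ultimately have "finite (range f)" by (rule finite_subset[rotated])
  then show False using assms(1) by (simp add: finite_image_iff)
qed

lemma poly_infinite_roots_shift:
  fixes p :: "'a::field_char_0 poly"
  assumes "\<And>n::nat. n \<ge> N \<Longrightarrow> poly p (of_nat n) = 0"
  shows "p = 0"
proof (rule poly_infinite_roots[of "\<lambda>k. of_nat (k + N)"])
  show "inj (\<lambda>k. (of_nat (k + N) :: 'a))" by (auto intro!: injI)
  show "poly p (of_nat (k + N)) = 0" for k using assms[of "k + N"] by (simp del: of_nat_add)
qed

lemma E_rel:
  fixes P Q :: "'a::field_char_0 weyl"
  assumes P: "P \<in> weyl_carrier" "homog P d" and Q: "Q \<in> weyl_carrier"
    and rel: "Mc (weyl_mult P Q) n n - Mc (weyl_mult Q P) n n = c"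
  shows "c = (if int n - d \<ge> 0 then poly (Pol Q (-d)) (of_nat n) * poly (Pol P d) (of_nat n - of_int d) else 0)
           - (if int n + d \<ge> 0 then poly (Pol P d) (of_nat n) * poly (Pol Q (-d)) (of_nat n + of_int d) else 0)"
proof -
  have A: "Mc (weyl_mult P Q) n n = (if int n - d \<ge> 0 then poly (Pol Q (-d)) (of_nat n) * poly (Pol P d) (of_nat n - of_int d) else 0)"
  proof (cases "int n - d \<ge> 0")
    case True
    have k: "int (nat (int n - d)) = int n - d" using True by simp
    have "(of_nat (nat (int n - d)) :: 'a) = of_int (int (nat (int n - d)))" by simp
    also have "\<dots> = of_nat n - of_int d" unfolding k by simp
    finally have kk: "(of_nat (nat (int n - d)) :: 'a) = of_nat n - of_int d" .
    show ?thesis using True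
      by (simp add: Mc_mult_homL[OF P Q True] Mc_Pol P(1) Q k kk)
  next
    case False
    then show ?thesis by (simp add: Mc_mult_homL0[OF P Q])
  qed
  have B: "Mc (weyl_mult Q P) n n = (if int n + d \<ge> 0 then poly (Pol P d) (of_nat n) * poly (Pol Q (-d)) (of_nat n + of_int d) else 0)"
  proof (cases "int n + d \<ge> 0")
    case True
    have k: "int (nat (int n + d)) = int n + d" using True by simp
    have "(of_nat (nat (int n + d)) :: 'a) = of_int (int (nat (int n + d)))" by simp
    also have "\<dots> = of_nat n + of_int d" unfolding k by simp
    finally have kk: "(of_nat (nat (int n + d)) :: 'a) = of_nat n + of_int d" .
    show ?thesis using True
      by (simp add: Mc_mult_homR[OF P Q True] Mc_Pol P(1) Q k kk)
  next
    case False
    then show ?thesis by (simp add: Mc_mult_homR0[OF P Q])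
  qed
  show ?thesis using rel A B by simp
qed



lemma Pol_inj:
  fixes f g :: "'a::field_char_0 weyl"
  assumes f: "f \<in> weyl_carrier" and g: "g \<in> weyl_carrier" and e: "\<And>e. Pol f e = Pol g e"
  shows "f = g"
proof (rule phi_inj[OF f g])
  have M: "Mc f n m = Mc g n m" for n m using e by (simp add: Mc_Pol f g)
  show "phi f = phi g"
  proof (rule app_eqI, rule poly_eqI)
    fix q m
    have "coeff (app (phi f) q) m = (\<Sum>k\<le>degree q. coeff q k * Mc f k m)"
      unfolding Mc_def by (rule coeff_app_expand[OF order_refl])
    moreover have "coeff (app (phi g) q) m = (\<Sum>k\<le>degree q. coeff q k * Mc g k m)"
      unfolding Mc_def by (rule coeff_app_expand[OF order_refl])
    ultimately show "coeff (app (phi f) q) m = coeff (app (phi g) q) m"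
      using M by simp
  qed
qed

lemma Pol_zero_at_0:
  assumes "d < 0"
  shows "poly (Pol f d) 0 = (0::'a::field)"
  unfolding Pol_def poly_sum
proof (rule sum.neutral, rule ballI)
  fix p
  show "poly (if int (fst p) - int (snd p) = d then smult (f (fst p) (snd p)) (ffp (snd p)) else 0) 0 = 0"
  proof (cases "int (fst p) - int (snd p) = d")
    case True
    then have "snd p > 0" using assms by linarith
    then show ?thesis using True by (simp add: ffp_zero)
  qed simp
qed

lemma Pol_X: "(l::'a::field) \<noteq> 0 \<Longrightarrow> Pol (weyl_smult l weyl_X) e = (if e = 1 then [:l:] else 0)"
proof -
  assume l: "l \<noteq> 0"
  have s: "weyl_supp (weyl_smult l weyl_X) = {(1,0)}"
    using l by (auto simp: weyl_supp_def weyl_smult_def weyl_X_def split: if_splits)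
  show ?thesis unfolding Pol_def s by (simp add: ffp_def weyl_smult_def weyl_X_def)
qed

lemma Pol_Y: "(l::'a::field) \<noteq> 0 \<Longrightarrow> Pol (weyl_smult l weyl_Y) e = (if e = -1 then [:0, l:] else 0)"
proof -
  assume l: "l \<noteq> 0"
  have s: "weyl_supp (weyl_smult l weyl_Y) = {(0,1)}"
    using l by (auto simp: weyl_supp_def weyl_smult_def weyl_Y_def split: if_splits)
  show ?thesis unfolding Pol_def s by (simp add: ffp_def weyl_smult_def weyl_Y_def)
qed

lemma degree1_split:
  fixes A B :: "'a::field poly"
  assumes "degree (A * B) = 1" "A * B \<noteq> 0"
  shows "(degree A = 0 \<and> degree B = 1) \<or> (degree A = 1 \<and> degree B = 0)"
proof -
  have "A \<noteq> 0" "B \<noteq> 0" using assms(2) by auto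
  then have "degree A + degree B = 1" using assms(1) degree_mult_eq by metis
  then show ?thesis by linarith
qed

lemma deg0_const:
  assumes "degree (A::'a::field poly) = 0" shows "A = [:poly A x:]"
proof -
  obtain a where "A = pCons a 0" using degree_eq_zeroE[OF assms] by blast
  then show ?thesis by simp
qed

lemma homog_key:
  fixes P Q :: "'a::field_char_0 weyl"
  assumes P: "P \<in> weyl_carrier" "homog P d" and Q: "Q \<in> weyl_carrier" and c: "c \<noteq> 0"
    and rel: "\<And>n. Mc (weyl_mult P Q) n n - Mc (weyl_mult Q P) n n = c"
  shows "(\<exists>l. l \<noteq> 0 \<and> P = weyl_smult l weyl_X) \<or> (\<exists>l. l \<noteq> 0 \<and> P = weyl_smult l weyl_Y)"
proof -
  define PP where "PP = Pol P d"
  define QQ where "QQ = Pol Q (-d)"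
  define G where "G = PP * pcompose QQ [:of_int d, 1:]"
  have pG: "poly G x = poly PP x * poly QQ (x + of_int d)" for x
    unfolding G_def by (simp add: poly_pcompose add.commute)
  have E: "c = (if int n - d \<ge> 0 then poly QQ (of_nat n) * poly PP (of_nat n - of_int d) else 0)
           - (if int n + d \<ge> 0 then poly PP (of_nat n) * poly QQ (of_nat n + of_int d) else 0)" for n
    unfolding PP_def QQ_def by (rule E_rel[OF P Q rel])
  have d0: "d \<noteq> 0"
  proof
    assume "d = 0"
    then show False using E[of 0] c by simp
  qed
  define R where "R = pcompose G [:- of_int d, 1:] - G - [:c:]"
  have "R = 0"
  proof (rule poly_infinite_roots_shift[of "nat \<bar>d\<bar>"])
    fix n :: nat assume n: "n \<ge> nat \<bar>d\<bar>"
    then have "int n - d \<ge> 0" "int n + d \<ge> 0" by linarith+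
    then have "c = poly QQ (of_nat n) * poly PP (of_nat n - of_int d) - poly PP (of_nat n) * poly QQ (of_nat n + of_int d)"
      using E[of n] by simp
    moreover have "poly (pcompose G [:- of_int d, 1:]) (of_nat n) = poly PP (of_nat n - of_int d) * poly QQ (of_nat n)"
      by (simp add: poly_pcompose pG)
    ultimately show "poly R (of_nat n) = 0"
      unfolding R_def by (simp add: pG algebra_simps)
  qed
  have feq: "poly G (x - of_int d) - poly G x = c" for x
  proof -
    have "poly R x = 0" using \<open>R = 0\<close> by simp
    moreover have "poly [:- of_int d, 1:] x = x - of_int d" by simp
    ultimately show ?thesis unfolding R_def by (simp add: poly_pcompose)
  qed
  have iter: "poly G (of_nat k * of_int d) = poly G 0 - of_nat k * c" for k
  proof (induction k)
    case 0 then show ?case by simp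
  next
    case (Suc k)
    have "poly G (of_nat (Suc k) * of_int d - of_int d) - poly G (of_nat (Suc k) * of_int d) = c" by (rule feq)
    moreover have "of_nat (Suc k) * of_int d - of_int d = (of_nat k * of_int d :: 'a)" by (simp add: algebra_simps)
    ultimately show ?case using Suc by (simp add: algebra_simps)
  qed
  define L where "L = G - [:poly G 0, - c / of_int d:]"
  have dnz: "(of_int d :: 'a) \<noteq> 0" using d0 by simp
  have "L = 0"
  proof (rule poly_infinite_roots[of "\<lambda>k. of_nat k * of_int d"])
    show "inj (\<lambda>k. (of_nat k * of_int d :: 'a))" using dnz by (auto intro!: injI)
    show "poly L (of_nat k * of_int d) = 0" for k
      unfolding L_def using iter[of k] dnz by (simp add: field_simps)
  qed
  then have hG0: "G = [:poly G 0, - c / of_int d:]" unfolding L_def by simp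
  define g0 where "g0 = poly G 0"
  have hG: "G = [:g0, - c / of_int d:]" unfolding g0_def by (rule hG0)
  have hGx: "poly G x = g0 - c / of_int d * x" for x
    using arg_cong[OF hG, of "\<lambda>r. poly r x"] by (simp add: algebra_simps)
  have cd: "c / of_int d \<noteq> 0" using c dnz by simp
  show ?thesis
  proof (cases "d > 0")
    case True
    have E0: "c = - g0" using E[of 0] True by (simp add: pG g0_def)
    have d1: "d = 1"
    proof (rule ccontr)
      assume "d \<noteq> 1"
      then have "int 1 - d < 0" "int 1 + d \<ge> 0" using True by linarith+
      then have "c = - poly G 1" using E[of 1] by (simp add: pG add.commute)
      then have "c = c + c / of_int d" using hGx[of 1] E0 by simp
      then show False using cd by simp
    qed
    define QQ1 where "QQ1 = pcompose QQ [:1, 1:]"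
    have GP: "G = PP * QQ1" unfolding G_def QQ1_def d1 by simp
    have Gc: "G = [:- c, - c:]" using hG E0 d1 by simp
    have Gnz: "G \<noteq> 0" using Gc c by simp
    have degG: "degree G = 1" using Gc c by simp
    have QQ0: "poly QQ 0 = 0" unfolding QQ_def d1 by (rule Pol_zero_at_0) simp
    have "degree QQ1 \<noteq> 0"
    proof
      assume "degree QQ1 = 0"
      then have "QQ1 = [:poly QQ1 (-1):]" by (rule deg0_const)
      moreover have "poly QQ1 (-1) = 0" unfolding QQ1_def by (simp add: poly_pcompose QQ0)
      ultimately have "QQ1 = 0" by simp
      then show False using Gnz GP by simp
    qed
    then have "degree PP = 0" using degree1_split[of PP QQ1] degG Gnz GP by auto
    then have PPc0: "PP = [:poly PP 0:]" by (rule deg0_const)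
    define lam where "lam = poly PP 0"
    have PPc: "PP = [:lam:]" unfolding lam_def by (rule PPc0)
    have lnz: "lam \<noteq> 0"
    proof
      assume "lam = 0"
      then have "PP = 0" using PPc by simp
      then show False using Gnz GP by simp
    qed
    have "P = weyl_smult lam weyl_X"
    proof (rule Pol_inj[OF P(1) smult_carrier[OF X_carrier]])
      fix e
      show "Pol P e = Pol (weyl_smult lam weyl_X) e"
        unfolding Pol_X[OF lnz]
        using Pol_homog[OF P(2), of e] PPc unfolding PP_def d1 by auto
    qed
    then show ?thesis using lnz by blast
  next
    case False
    then have dneg: "d < 0" using d0 by simp
    have "c = poly G (- of_int d)" using E[of 0] dneg by (simp add: pG)
    then have G00: "g0 = 0" using hGx[of "- of_int d"] dnz by (simp add: field_simps)
    have d1: "d = -1"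
    proof (rule ccontr)
      assume "d \<noteq> -1"
      then have "int 1 - d \<ge> 0" "int 1 + d < 0" using dneg by linarith+
      then have "c = poly G (1 - of_int d)" using E[of 1] by (simp add: pG mult.commute)
      then have "c = - (c / of_int d) + c" using hGx[of "1 - of_int d"] G00 dnz by (simp add: field_simps)
      then show False using cd by simp
    qed
    define QQm where "QQm = pcompose QQ [:-1, 1:]"
    have GP: "G = PP * QQm" unfolding G_def QQm_def d1 by simp
    have Gc: "G = [:0, c:]" using hG G00 d1 by simp
    have Gnz: "G \<noteq> 0" using Gc c by simp
    have degG: "degree G = 1" using Gc c by simp
    have PP0: "poly PP 0 = 0" unfolding PP_def d1 by (rule Pol_zero_at_0) simp
    have "degree PP \<noteq> 0"
    proof
      assume "degree PP = 0"
      then have "PP = [:poly PP 0:]" by (rule deg0_const)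
      then have "PP = [:0:]" unfolding PP0 .
      then show False using Gnz GP by simp
    qed
    then have "degree QQm = 0" using degree1_split[of PP QQm] degG Gnz GP by auto
    then have QQc0: "QQm = [:poly QQm 0:]" by (rule deg0_const)
    define mu where "mu = poly QQm 0"
    have QQc: "QQm = [:mu:]" unfolding mu_def by (rule QQc0)
    have munz: "mu \<noteq> 0"
    proof
      assume "mu = 0"
      then have "QQm = 0" using QQc by simp
      then show False using Gnz GP by simp
    qed
    have "G = smult mu PP" unfolding GP QQc by simp
    then have "smult mu PP = [:0, c:]" using Gc by simp
    then have "smult (inverse mu) (smult mu PP) = smult (inverse mu) [:0, c:]" by simp
    then have PPc: "PP = [:0, c / mu:]" using munz by (simp add: field_simps)
    have lnz: "c / mu \<noteq> 0" using c munz by simp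
    have "P = weyl_smult (c / mu) weyl_Y"
    proof (rule Pol_inj[OF P(1) smult_carrier[OF Y_carrier]])
      fix e
      show "Pol P e = Pol (weyl_smult (c / mu) weyl_Y) e"
        unfolding Pol_Y[OF lnz]
        using Pol_homog[OF P(2), of e] PPc unfolding PP_def d1 by auto
    qed
    then show ?thesis using lnz by blast
  qed
qed



lemma mass1_homog:
  fixes P :: "'a::field weyl"
  assumes "weyl_mass P = 1"
  shows "\<exists>d. homog P d"
proof -
  from assms obtain d0 where d0: "{d::int. weyl_component d P \<noteq> weyl_zero} = {d0}"
    unfolding weyl_mass_def by (meson card_1_singletonE)
  have "homog P d0"
    unfolding homog_def
  proof (intro allI impI)
    fix i j assume "P i j \<noteq> 0"
    then have "weyl_component (int i - int j) P \<noteq> weyl_zero"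
      by (auto simp: weyl_component_def weyl_zero_def fun_eq_iff)
    then have "int i - int j \<in> {d0}" using d0 by blast
    then show "int i - int j = d0" by simp
  qed
  then show ?thesis by blast
qed

lemma cw_inv: "(l::'a::field_char_0) \<noteq> 0 \<Longrightarrow> cw (inverse l) * cw l = 1"
  by (simp add: cw_mult[symmetric] cw_one)
lemma cw_inv2: "(l::'a::field_char_0) \<noteq> 0 \<Longrightarrow> cw l * cw (inverse l) = 1"
  by (simp add: cw_mult[symmetric] cw_one)

lemma centralizer_X: "r * Xw = Xw * r \<Longrightarrow> rep r i (Suc j) = 0"
  using comm_X_coeff[of r i j] by (simp add: rep_zero weyl_zero_def)
lemma centralizer_Y: "Yw * r = r * Yw \<Longrightarrow> rep r (Suc i) j = 0"
  using comm_Y_coeff[of r i j] by (simp add: rep_zero weyl_zero_def)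

definition psub :: "(nat \<Rightarrow> 'a::field_char_0) \<Rightarrow> nat set \<Rightarrow> 'a wa \<Rightarrow> 'a wa" where
  "psub c I u = (\<Sum>i\<in>I. cw (c i) * u ^ i)"

lemma ev_psub:
  assumes r: "y * x = x * y + 1"
  shows "ev x y (psub c I u) = psub c I (ev x y u)"
  unfolding psub_def by (simp add: ev_sum ev_cw_mult ev_pow[OF r])

lemma inX_expand:
  assumes "\<And>i j. rep r i (Suc j) = 0"
  shows "r = psub (\<lambda>i. rep r i 0) (fst ` weyl_supp (rep r)) Xw"
proof -
  let ?I = "fst ` weyl_supp (rep r)"
  have fin: "finite ((\<lambda>i. (i, 0::nat)) ` ?I)" using rep_finite[of r] by simp
  have sub: "weyl_supp (rep r) \<subseteq> (\<lambda>i. (i, 0::nat)) ` ?I"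
  proof
    fix p assume p: "p \<in> weyl_supp (rep r)"
    have "snd p = 0"
    proof (rule ccontr)
      assume "snd p \<noteq> 0"
      then obtain j where "snd p = Suc j" by (cases "snd p") auto
      then show False using p assms by (simp add: supp_iff)
    qed
    then show "p \<in> (\<lambda>i. (i, 0::nat)) ` ?I" using p by (cases p) force
  qed
  have "r = (\<Sum>p\<in>(\<lambda>i. (i, 0::nat)) ` ?I. cw (rep r (fst p) (snd p)) * (Xw ^ fst p * Yw ^ snd p))"
    by (rule expand[OF fin sub])
  also have "\<dots> = (\<Sum>i\<in>?I. cw (rep r i 0) * Xw ^ i)"
    by (subst sum.reindex) (auto intro: inj_onI)
  finally show ?thesis unfolding psub_def .
qed

lemma inY_expand:
  assumes "\<And>i j. rep r (Suc i) j = 0"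
  shows "r = psub (\<lambda>j. rep r 0 j) (snd ` weyl_supp (rep r)) Yw"
proof -
  let ?I = "snd ` weyl_supp (rep r)"
  have fin: "finite ((\<lambda>j. (0::nat, j)) ` ?I)" using rep_finite[of r] by simp
  have sub: "weyl_supp (rep r) \<subseteq> (\<lambda>j. (0::nat, j)) ` ?I"
  proof
    fix p assume p: "p \<in> weyl_supp (rep r)"
    have "fst p = 0"
    proof (rule ccontr)
      assume "fst p \<noteq> 0"
      then obtain i where "fst p = Suc i" by (cases "fst p") auto
      then show False using p assms by (simp add: supp_iff)
    qed
    then show "p \<in> (\<lambda>j. (0::nat, j)) ` ?I" using p by (cases p) force
  qed
  have "r = (\<Sum>p\<in>(\<lambda>j. (0::nat, j)) ` ?I. cw (rep r (fst p) (snd p)) * (Xw ^ fst p * Yw ^ snd p))"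
    by (rule expand[OF fin sub])
  also have "\<dots> = (\<Sum>j\<in>?I. cw (rep r 0 j) * Yw ^ j)"
    by (subst sum.reindex) (auto intro: inj_onI)
  finally show ?thesis unfolding psub_def .
qed



lemma caseA:
  fixes p q :: "'a::field_char_0 wa"
  assumes rel: "p * q = q * p + 1" and l: "l \<noteq> 0" and pf: "p = cw l * Xw"
  shows "\<exists>u v. ev q p u = Xw \<and> ev q p v = Yw"
proof -
  define il where "il = inverse l"
  have h0: "cw l * (Xw * q - q * Xw) = 1"
    using rel unfolding pf by (simp add: right_diff_distrib mult.assoc cw_mid[of q])
  have h1: "Xw * q - q * Xw = cw il"
  proof -
    have "cw il * (cw l * (Xw * q - q * Xw)) = cw il" using h0 by simp
    then show ?thesis using cw_inv[OF l] unfolding il_def by (simp add: mult.assoc[symmetric])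
  qed
  define r where "r = q + cw il * Yw"
  have "r * Xw - Xw * r = (q * Xw - Xw * q) + cw il * (Yw * Xw - Xw * Yw)"
    unfolding r_def by (simp add: algebra_simps cw_mid[of Xw])
  also have "\<dots> = 0" using h1 by (simp add: YX_rel algebra_simps)
  finally have "r * Xw = Xw * r" by simp
  then have rX: "r = psub (\<lambda>i. rep r i 0) (fst ` weyl_supp (rep r)) Xw"
    by (intro inX_expand centralizer_X)
  define c where "c = (\<lambda>i. rep r i 0)"
  define I where "I = fst ` weyl_supp (rep r)"
  define u where "u = cw il * Yw"
  define v where "v = cw l * (psub c I u - Xw)"
  have eu: "ev q p u = Xw"
    unfolding u_def ev_cw_mult ev_Y pf using cw_inv[OF l] unfolding il_def by (simp add: mult.assoc[symmetric])
  have "ev q p v = cw l * (psub c I Xw - q)"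
    unfolding v_def ev_cw_mult ev_diff ev_psub[OF rel] eu ev_X ..
  also have "\<dots> = cw l * (r - q)" using rX unfolding c_def I_def by simp
  also have "\<dots> = Yw" unfolding r_def using cw_inv2[OF l] unfolding il_def by (simp add: mult.assoc[symmetric])
  finally show ?thesis using eu by blast
qed

lemma caseB:
  fixes p q :: "'a::field_char_0 wa"
  assumes rel: "p * q = q * p + 1" and l: "l \<noteq> 0" and pf: "p = cw l * Yw"
  shows "\<exists>u v. ev q p u = Xw \<and> ev q p v = Yw"
proof -
  define il where "il = inverse l"
  have h0: "cw l * (Yw * q - q * Yw) = 1"
    using rel unfolding pf by (simp add: right_diff_distrib mult.assoc cw_mid[of q])
  have h1: "Yw * q - q * Yw = cw il"
  proof -
    have "cw il * (cw l * (Yw * q - q * Yw)) = cw il" using h0 by simp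
    then show ?thesis using cw_inv[OF l] unfolding il_def by (simp add: mult.assoc[symmetric])
  qed
  define r where "r = q - cw il * Xw"
  have "Yw * r - r * Yw = (Yw * q - q * Yw) - cw il * (Yw * Xw - Xw * Yw)"
    unfolding r_def by (simp add: algebra_simps cw_mid[of Yw])
  also have "\<dots> = 0" using h1 by (simp add: YX_rel algebra_simps)
  finally have "Yw * r = r * Yw" by simp
  then have rY: "r = psub (\<lambda>j. rep r 0 j) (snd ` weyl_supp (rep r)) Yw"
    by (intro inY_expand centralizer_Y)
  define c where "c = (\<lambda>j. rep r 0 j)"
  define I where "I = snd ` weyl_supp (rep r)"
  define v where "v = cw il * Yw"
  define u where "u = cw l * (Xw - psub c I v)"
  have ev: "ev q p v = Yw"
    unfolding v_def ev_cw_mult ev_Y pf using cw_inv[OF l] unfolding il_def by (simp add: mult.assoc[symmetric])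
  have "ev q p u = cw l * (q - psub c I Yw)"
    unfolding u_def ev_cw_mult ev_diff ev_psub[OF rel] ev ev_X ..
  also have "\<dots> = cw l * (q - r)" using rY unfolding c_def I_def by simp
  also have "\<dots> = Xw" unfolding r_def using cw_inv2[OF l] unfolding il_def by (simp add: mult.assoc[symmetric])
  finally show ?thesis using ev by blast
qed

lemma caseC:
  fixes p q :: "'a::field_char_0 wa"
  assumes rel: "p * q = q * p + 1" and l: "l \<noteq> 0" and qf: "q = cw l * Xw"
  shows "\<exists>u v. ev q p u = Xw \<and> ev q p v = Yw"
proof -
  define il where "il = inverse l"
  have h0: "cw l * (p * Xw - Xw * p) = 1"
    using rel unfolding qf by (simp add: right_diff_distrib mult.assoc cw_mid[of p])
  have h1: "p * Xw - Xw * p = cw il"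
  proof -
    have "cw il * (cw l * (p * Xw - Xw * p)) = cw il" using h0 by simp
    then show ?thesis using cw_inv[OF l] unfolding il_def by (simp add: mult.assoc[symmetric])
  qed
  define r where "r = p - cw il * Yw"
  have "r * Xw - Xw * r = (p * Xw - Xw * p) - cw il * (Yw * Xw - Xw * Yw)"
    unfolding r_def by (simp add: algebra_simps cw_mid[of Xw])
  also have "\<dots> = 0" using h1 by (simp add: YX_rel algebra_simps)
  finally have "r * Xw = Xw * r" by simp
  then have rX: "r = psub (\<lambda>i. rep r i 0) (fst ` weyl_supp (rep r)) Xw"
    by (intro inX_expand centralizer_X)
  define c where "c = (\<lambda>i. rep r i 0)"
  define I where "I = fst ` weyl_supp (rep r)"
  define u where "u = cw il * Xw"
  define v where "v = cw l * (Yw - psub c I u)"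
  have eu: "ev q p u = Xw"
    unfolding u_def ev_cw_mult ev_X qf using cw_inv[OF l] unfolding il_def by (simp add: mult.assoc[symmetric])
  have "ev q p v = cw l * (p - psub c I Xw)"
    unfolding v_def ev_cw_mult ev_diff ev_psub[OF rel] eu ev_Y ..
  also have "\<dots> = cw l * (p - r)" using rX unfolding c_def I_def by simp
  also have "\<dots> = Yw" unfolding r_def using cw_inv2[OF l] unfolding il_def by (simp add: mult.assoc[symmetric])
  finally show ?thesis using eu by blast
qed

lemma caseD:
  fixes p q :: "'a::field_char_0 wa"
  assumes rel: "p * q = q * p + 1" and l: "l \<noteq> 0" and qf: "q = cw l * Yw"
  shows "\<exists>u v. ev q p u = Xw \<and> ev q p v = Yw"
proof -
  define il where "il = inverse l"
  have h0: "cw l * (p * Yw - Yw * p) = 1"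
    using rel unfolding qf by (simp add: right_diff_distrib mult.assoc cw_mid[of p])
  have h1: "p * Yw - Yw * p = cw il"
  proof -
    have "cw il * (cw l * (p * Yw - Yw * p)) = cw il" using h0 by simp
    then show ?thesis using cw_inv[OF l] unfolding il_def by (simp add: mult.assoc[symmetric])
  qed
  define r where "r = p + cw il * Xw"
  have "Yw * r - r * Yw = (Yw * p - p * Yw) + cw il * (Yw * Xw - Xw * Yw)"
    unfolding r_def by (simp add: algebra_simps cw_mid[of Yw])
  also have "\<dots> = 0" using h1 by (simp add: YX_rel algebra_simps)
  finally have "Yw * r = r * Yw" by simp
  then have rY: "r = psub (\<lambda>j. rep r 0 j) (snd ` weyl_supp (rep r)) Yw"
    by (intro inY_expand centralizer_Y)
  define c where "c = (\<lambda>j. rep r 0 j)"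
  define I where "I = snd ` weyl_supp (rep r)"
  define v where "v = cw il * Xw"
  define u where "u = cw l * (psub c I v - Yw)"
  have ev: "ev q p v = Yw"
    unfolding v_def ev_cw_mult ev_X qf using cw_inv[OF l] unfolding il_def by (simp add: mult.assoc[symmetric])
  have "ev q p u = cw l * (psub c I Yw - p)"
    unfolding u_def ev_cw_mult ev_diff ev_psub[OF rel] ev ev_Y ..
  also have "\<dots> = cw l * (r - p)" using rY unfolding c_def I_def by simp
  also have "\<dots> = Xw" unfolding r_def using cw_inv2[OF l] unfolding il_def by (simp add: mult.assoc[symmetric])
  finally show ?thesis using ev by blast
qed



lemma wabs_X: "wabs weyl_X = Xw" by (metis Xw.rep_eq rep_inverse)
lemma wabs_Y: "wabs weyl_Y = Yw" by (metis Yw.rep_eq rep_inverse)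

lemma wabs_smult_X: "wabs (weyl_smult l weyl_X) = cw l * Xw"
  by (simp add: wabs_smult X_carrier wabs_X)
lemma wabs_smult_Y: "wabs (weyl_smult l weyl_Y) = cw l * Yw"
  by (simp add: wabs_smult Y_carrier wabs_Y)

theorem corollary2p4:
  fixes P Q :: "'a::field_char_0 weyl"
  assumes "P \<in> weyl_carrier" and "Q \<in> weyl_carrier"
    and "weyl_mass P = 1 \<or> weyl_mass Q = 1"
    and "weyl_sub (weyl_mult P Q) (weyl_mult Q P) = weyl_one"
  shows "\<exists>\<tau>. weyl_K_automorphism \<tau> \<and> P = \<tau> weyl_Y \<and> Q = \<tau> weyl_X"
proof -
  note Pc = assms(1) and Qc = assms(2)
  define p where "p = (wabs P :: 'a wa)"
  define q where "q = (wabs Q :: 'a wa)"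
  have rp: "rep p = P" unfolding p_def using Pc by (simp add: wabs_inverse)
  have rq: "rep q = Q" unfolding q_def using Qc by (simp add: wabs_inverse)
  have "rep (p * q - q * p) = rep 1"
    using assms(4) by (simp add: rep_sub rep_mult rep_one rp rq)
  then have "p * q - q * p = 1" by (simp add: rep_inject)
  then have rel: "p * q = q * p + 1" by (simp add: algebra_simps)
  have M1: "Mc (weyl_mult P Q) n n - Mc (weyl_mult Q P) n n = 1" for n
  proof -
    have "Mc (weyl_mult P Q) n n - Mc (weyl_mult Q P) n n = Mc (weyl_sub (weyl_mult P Q) (weyl_mult Q P)) n n"
      by (simp add: Mc_sub mult_carrier Pc Qc)
    also have "\<dots> = 1" by (simp add: assms(4) Mc_one)
    finally show ?thesis .
  qed
  have M2: "Mc (weyl_mult Q P) n n - Mc (weyl_mult P Q) n n = -1" for n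
    using M1[of n] by (simp add: algebra_simps)
  have "\<exists>u v. ev q p u = Xw \<and> ev q p v = Yw"
    using assms(3)
  proof
    assume "weyl_mass P = 1"
    then obtain d where "homog P d" using mass1_homog by blast
    from homog_key[OF Pc this Qc _ M1]
    have "(\<exists>l. l \<noteq> 0 \<and> P = weyl_smult l weyl_X) \<or> (\<exists>l. l \<noteq> 0 \<and> P = weyl_smult l weyl_Y)" by simp
    then show ?thesis
    proof
      assume "\<exists>l. l \<noteq> 0 \<and> P = weyl_smult l weyl_X"
      then obtain l where "l \<noteq> 0" "P = weyl_smult l weyl_X" by blast
      then show ?thesis using caseA[OF rel] unfolding p_def by (simp add: wabs_smult_X)
    next
      assume "\<exists>l. l \<noteq> 0 \<and> P = weyl_smult l weyl_Y"
      then obtain l where "l \<noteq> 0" "P = weyl_smult l weyl_Y" by blast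
      then show ?thesis using caseB[OF rel] unfolding p_def by (simp add: wabs_smult_Y)
    qed
  next
    assume "weyl_mass Q = 1"
    then obtain d where "homog Q d" using mass1_homog by blast
    from homog_key[OF Qc this Pc _ M2]
    have "(\<exists>l. l \<noteq> 0 \<and> Q = weyl_smult l weyl_X) \<or> (\<exists>l. l \<noteq> 0 \<and> Q = weyl_smult l weyl_Y)" by simp
    then show ?thesis
    proof
      assume "\<exists>l. l \<noteq> 0 \<and> Q = weyl_smult l weyl_X"
      then obtain l where "l \<noteq> 0" "Q = weyl_smult l weyl_X" by blast
      then show ?thesis using caseC[OF rel] unfolding q_def by (simp add: wabs_smult_X)
    next
      assume "\<exists>l. l \<noteq> 0 \<and> Q = weyl_smult l weyl_Y"
      then obtain l where "l \<noteq> 0" "Q = weyl_smult l weyl_Y" by blast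
      then show ?thesis using caseD[OF rel] unfolding q_def by (simp add: wabs_smult_Y)
    qed
  qed
  then obtain u v where u: "ev q p u = Xw" and v: "ev q p v = Yw" by blast
  have aut: "weyl_K_automorphism (\<lambda>f. rep (ev q p (wabs f)))"
    by (rule auto_ev[OF rel u v])
  have "rep (ev q p (wabs weyl_Y)) = P" by (simp add: wabs_Y ev_Y rp)
  moreover have "rep (ev q p (wabs weyl_X)) = Q" by (simp add: wabs_X ev_X rq)
  ultimately show ?thesis using aut by metis
qed


end
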